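(* Suppose Assumptions (A1), (A2), (A3) hold and let $x\in\mathcal{X}$. (1) If Assumption (SC) holds, then: if $x$ is an SCSC point, then $\nabla_x y^*(x)$ exists; the converse fails in general (there are problems satisfying these assumptions and points $x$ at which $\nabla_x y^*(x)$ exists but $x$ is not an SCSC point). (2) If Assumption (LIN) holds, then the following are equivalent: (a) $x$ is an SCSC point; (b) $y^*(x)$ is a single point; (c) $\nabla_x y^*(x)$ exists.
   Context: Let $f,g,h_1,\dots,h_k:\mathbb{R}^n\times\mathbb{R}^m\to\mathbb{R}$ and $\mathcal{X}\subseteq\mathbb{R}^n$. For $x\in\mathcal{X}$ let $\mathcal{Y}(x)=\{y: h_i(x,y)\le 0,\ i=1,\dots,k\}$ and $y^*(x)=\arg\min_{y\in\mathcal{Y}(x)} g(x,y)$ (a set-valued map in general; "$\nabla_x y^*(x)$ exists" means $y^*$ is single-valued near $x$ and differentiable at $x$). Assumptions: (A1) $f$ is once and $g,h_i$ twice continuously differentiable; (A2) $\mathcal{X}$ is convex and compact and for every $x\in\mathcal{X}$ there is $y$ with $h_i(x,y)<0$ for all $i$; (A3) (LICQ) for every $x\in\mathcal{X}$ and $y\in y^*(x)$, the gradients $\{\nabla_y h_i(x,y): h_i(x,y)=0\}$ are linearly independent; (SC) for every $x\in\mathcal{X}$, $g(x,\cdot)$ is $\mu_g$-strongly convex and each $h_i(x,\cdot)$ is convex; (LIN) for every $x\in\mathcal{X}$, $g(x,\cdot)$ and all $h_i(x,\cdot)$ are linear (affine) in $y$ and $\mathcal{Y}(x)$ is compact. For $y\in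 y^*(x)$ let $\lambda_i(x,y)\ge0$ be the optimal KKT multiplier of the $i$-th constraint. $x$ is an SCSC point if for every $y\in y^*(x)$ and every $i$, $h_i(x,y)=0$ implies $\lambda_i(x,y)>0$. *)

theory Defs
  imports "HOL-Analysis.Analysis"
begin

definition C1_fun :: "('p::euclidean_space \<Rightarrow> real) \<Rightarrow> bool" where
  "C1_fun F \<longleftrightarrow> (\<exists>F'. (\<forall>z. (F has_derivative blinfun_apply (F' z)) (at z)) \<and> continuous_on UNIV F')"

definition C2_fun :: "('p::euclidean_space \<Rightarrow> real) \<Rightarrow> bool" where
  "C2_fun F \<longleftrightarrow> (\<exists>F' F''. (\<forall>z. (F has_derivative blinfun_apply (F' z)) (at z)) \<and>
      (\<forall>z. (F' has_derivative blinfun_apply (F'' z)) (at z)) \<and> continuous_on UNIV F'')"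

definition strongly_convex :: "real \<Rightarrow> ('b::real_normed_vector \<Rightarrow> real) \<Rightarrow> bool" where
  "strongly_convex \<mu> \<phi> \<longleftrightarrow> \<mu> > 0 \<and> (\<forall>a b t. 0 \<le> t \<and> t \<le> 1 \<longrightarrow>
     \<phi> (t *\<^sub>R a + (1 - t) *\<^sub>R b) \<le> t * \<phi> a + (1 - t) * \<phi> b - \<mu> / 2 * t * (1 - t) * (norm (a - b))\<^sup>2)"

definition affine_fun :: "('b::real_vector \<Rightarrow> real) \<Rightarrow> bool" where
  "affine_fun \<phi> \<longleftrightarrow> (\<exists>l c. linear l \<and> (\<forall>y. \<phi> y = l y + c))"

text \<open>Constraints are indexed by i < k (i.e. h_1..h_k).\<close>
definition Yset :: "(nat \<Rightarrow> 'a \<Rightarrow> 'b \<Rightarrow> real) \<Rightarrow> nat \<Rightarrow> 'a \<Rightarrow> 'b set" where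
  "Yset h k x = {y. \<forall>i<k. h i x y \<le> 0}"

definition ystar :: "('a \<Rightarrow> 'b \<Rightarrow> real) \<Rightarrow> (nat \<Rightarrow> 'a \<Rightarrow> 'b \<Rightarrow> real) \<Rightarrow> nat \<Rightarrow> 'a \<Rightarrow> 'b set" where
  "ystar g h k x = {y \<in> Yset h k x. \<forall>y'\<in>Yset h k x. g x y \<le> g x y'}"

text \<open>LICQ at (x,y): gradients in y of the active constraints are linearly independent
  (gradients represented by the Frechet derivatives in y, i.e. linear functionals).\<close>
definition LICQ :: "(nat \<Rightarrow> 'a \<Rightarrow> 'b::euclidean_space \<Rightarrow> real) \<Rightarrow> nat \<Rightarrow> 'a \<Rightarrow> 'b \<Rightarrow> bool" where
  "LICQ h k x y \<longleftrightarrow> (\<forall>c::nat \<Rightarrow> real.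
     (\<forall>v. (\<Sum>i\<in>{i. i < k \<and> h i x y = 0}. c i * frechet_derivative (h i x) (at y) v) = 0)
     \<longrightarrow> (\<forall>i. i < k \<and> h i x y = 0 \<longrightarrow> c i = 0))"

definition KKT_mult :: "('a \<Rightarrow> 'b::euclidean_space \<Rightarrow> real) \<Rightarrow> (nat \<Rightarrow> 'a \<Rightarrow> 'b \<Rightarrow> real) \<Rightarrow> nat
    \<Rightarrow> 'a \<Rightarrow> 'b \<Rightarrow> (nat \<Rightarrow> real) \<Rightarrow> bool" where
  "KKT_mult g h k x y lam \<longleftrightarrow> (\<forall>i\<ge>k. lam i = 0) \<and> (\<forall>i<k. lam i \<ge> 0 \<and> lam i * h i x y = 0) \<and>
     (\<forall>v. frechet_derivative (g x) (at y) v + (\<Sum>i<k. lam i * frechet_derivative (h i x) (at y) v) = 0)"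

text \<open>The (unique, under LICQ) optimal KKT multiplier lambda(x,y).\<close>
definition kkt_lambda :: "('a \<Rightarrow> 'b::euclidean_space \<Rightarrow> real) \<Rightarrow> (nat \<Rightarrow> 'a \<Rightarrow> 'b \<Rightarrow> real) \<Rightarrow> nat
    \<Rightarrow> 'a \<Rightarrow> 'b \<Rightarrow> nat \<Rightarrow> real" where
  "kkt_lambda g h k x y = (THE lam. KKT_mult g h k x y lam)"

definition SCSC_point :: "('a \<Rightarrow> 'b::euclidean_space \<Rightarrow> real) \<Rightarrow> (nat \<Rightarrow> 'a \<Rightarrow> 'b \<Rightarrow> real) \<Rightarrow> nat \<Rightarrow> 'a \<Rightarrow> bool" where
  "SCSC_point g h k x \<longleftrightarrow> (\<forall>y\<in>ystar g h k x. \<forall>i<k. h i x y = 0 \<longrightarrow> kkt_lambda g h k x y i > 0)"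

text \<open>"nabla_x y^*(x) exists": y^* is single-valued on a neighbourhood of x (relative to the
  domain X on which y^* is defined) and the resulting function is differentiable at x.\<close>
definition grad_ystar_exists :: "('a::euclidean_space \<Rightarrow> 'b::euclidean_space \<Rightarrow> real) \<Rightarrow> (nat \<Rightarrow> 'a \<Rightarrow> 'b \<Rightarrow> real)
    \<Rightarrow> nat \<Rightarrow> 'a set \<Rightarrow> 'a \<Rightarrow> bool" where
  "grad_ystar_exists g h k X x \<longleftrightarrow> (\<exists>e>0. \<exists>\<phi>. (\<forall>x'\<in>X \<inter> ball x e. ystar g h k x' = {\<phi> x'}) \<and>
      \<phi> differentiable (at x within X))"

definition A1 :: "('a::euclidean_space \<Rightarrow> 'b::euclidean_space \<Rightarrow> real) \<Rightarrow> ('a \<Rightarrow> 'b \<Rightarrow> real)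
    \<Rightarrow> (nat \<Rightarrow> 'a \<Rightarrow> 'b \<Rightarrow> real) \<Rightarrow> nat \<Rightarrow> bool" where
  "A1 f g h k \<longleftrightarrow> C1_fun (case_prod f) \<and> C2_fun (case_prod g) \<and> (\<forall>i<k. C2_fun (case_prod (h i)))"

definition A2 :: "(nat \<Rightarrow> 'a::euclidean_space \<Rightarrow> 'b::euclidean_space \<Rightarrow> real) \<Rightarrow> nat \<Rightarrow> 'a set \<Rightarrow> bool" where
  "A2 h k X \<longleftrightarrow> convex X \<and> compact X \<and> (\<forall>x\<in>X. \<exists>y. \<forall>i<k. h i x y < 0)"

definition A3 :: "('a::euclidean_space \<Rightarrow> 'b::euclidean_space \<Rightarrow> real) \<Rightarrow> (nat \<Rightarrow> 'a \<Rightarrow> 'b \<Rightarrow> real)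
    \<Rightarrow> nat \<Rightarrow> 'a set \<Rightarrow> bool" where
  "A3 g h k X \<longleftrightarrow> (\<forall>x\<in>X. \<forall>y\<in>ystar g h k x. LICQ h k x y)"

definition SC :: "('a::euclidean_space \<Rightarrow> 'b::euclidean_space \<Rightarrow> real) \<Rightarrow> (nat \<Rightarrow> 'a \<Rightarrow> 'b \<Rightarrow> real)
    \<Rightarrow> nat \<Rightarrow> 'a set \<Rightarrow> bool" where
  "SC g h k X \<longleftrightarrow> (\<exists>\<mu>. \<forall>x\<in>X. strongly_convex \<mu> (g x) \<and> (\<forall>i<k. convex_on UNIV (h i x)))"

definition LIN :: "('a::euclidean_space \<Rightarrow> 'b::euclidean_space \<Rightarrow> real) \<Rightarrow> (nat \<Rightarrow> 'a \<Rightarrow> 'b \<Rightarrow> real)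
    \<Rightarrow> nat \<Rightarrow> 'a set \<Rightarrow> bool" where
  "LIN g h k X \<longleftrightarrow> (\<forall>x\<in>X. affine_fun (g x) \<and> (\<forall>i<k. affine_fun (h i x)) \<and> compact (Yset h k x))"

end

theory Submission
  imports Defs
begin


lemma span_image_repr:
  fixes a :: "nat \<Rightarrow> 'b::euclidean_space"
  assumes "finite I" "v \<in> span (a ` I)"
  shows "\<exists>c. v = (\<Sum>i\<in>I. c i *\<^sub>R a i)"
proof -
  let ?P = "{v. \<exists>c. v = (\<Sum>i\<in>I. c i *\<^sub>R a i)}"
  have sub: "subspace ?P"
    unfolding subspace_def
  proof (intro conjI ballI allI)
    show "0 \<in> ?P" by (auto intro!: exI[of _ "\<lambda>_. 0"])
  next
    fix x y assume "x \<in> ?P" "y \<in> ?P"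
    then obtain c1 c2 where "x = (\<Sum>i\<in>I. c1 i *\<^sub>R a i)" "y = (\<Sum>i\<in>I. c2 i *\<^sub>R a i)" by auto
    then show "x + y \<in> ?P"
      by (auto intro!: exI[of _ "\<lambda>i. c1 i + c2 i"] simp: sum.distrib scaleR_add_left)
  next
    fix r :: real and x assume "x \<in> ?P"
    then obtain c1 where "x = (\<Sum>i\<in>I. c1 i *\<^sub>R a i)" by auto
    then show "r *\<^sub>R x \<in> ?P"
      by (auto intro!: exI[of _ "\<lambda>i. r * c1 i"] simp: scaleR_sum_right)
  qed
  have base: "a ` I \<subseteq> ?P"
  proof
    fix w assume "w \<in> a ` I"
    then obtain j where j: "j \<in> I" "w = a j" by auto
    have "(\<Sum>i\<in>I. (if i = j then 1 else 0) *\<^sub>R a i) = a j"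
      using assms(1) j(1) by (simp add: if_distrib[of "\<lambda>t. t *\<^sub>R _"] sum.delta cong: if_cong)
    then show "w \<in> ?P" using j by (auto intro!: exI[of _ "\<lambda>i. if i = j then 1 else 0"])
  qed
  have "span (a ` I) \<subseteq> ?P" using span_minimal[OF base sub] .
  then show ?thesis using assms(2) by auto
qed

lemma dual_vector:
  fixes a :: "nat \<Rightarrow> 'b::euclidean_space"
  assumes fin: "finite A" and j: "j \<in> A"
    and ind: "\<forall>c. (\<Sum>i\<in>A. c i *\<^sub>R a i) = 0 \<longrightarrow> (\<forall>i\<in>A. c i = 0)"
  shows "\<exists>d. a j \<bullet> d = 1 \<and> (\<forall>i\<in>A-{j}. a i \<bullet> d = 0)"
proof -
  obtain p r where p: "p \<in> span (a ` (A - {j}))"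
    and r: "\<And>w. w \<in> span (a ` (A - {j})) \<Longrightarrow> orthogonal r w" and e: "a j = p + r"
    using orthogonal_subspace_decomp_exists by blast
  have rnz: "r \<noteq> 0"
  proof
    assume "r = 0"
    then have "a j \<in> span (a ` (A - {j}))" using e p by simp
    then obtain c where c: "a j = (\<Sum>i\<in>A-{j}. c i *\<^sub>R a i)"
      using span_image_repr[of "A - {j}" "a j" a] fin by auto
    let ?c = "c(j := -1)"
    have "(\<Sum>i\<in>A. ?c i *\<^sub>R a i) = ?c j *\<^sub>R a j + (\<Sum>i\<in>A-{j}. ?c i *\<^sub>R a i)"
      using fin j by (simp add: sum.remove)
    also have "(\<Sum>i\<in>A-{j}. ?c i *\<^sub>R a i) = (\<Sum>i\<in>A-{j}. c i *\<^sub>R a i)"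
      by (rule sum.cong) auto
    finally have "(\<Sum>i\<in>A. ?c i *\<^sub>R a i) = 0" using c by simp
    then have "?c j = 0" using ind j by blast
    then show False by simp
  qed
  have aj: "a j \<bullet> r = r \<bullet> r"
    using e r[OF p] by (simp add: orthogonal_def inner_add_left inner_add_right inner_commute)
  have ai: "a i \<bullet> r = 0" if "i \<in> A - {j}" for i
    using r[of "a i"] that by (simp add: span_base orthogonal_def inner_commute)
  have rr: "r \<bullet> r \<noteq> 0" using rnz by simp
  show ?thesis
    by (rule exI[of _ "r /\<^sub>R (r \<bullet> r)"]) (use aj ai rr in auto)
qed

lemma farkas_indep:
  fixes a :: "nat \<Rightarrow> 'b::euclidean_space"
  assumes fin: "finite A"
    and ind: "\<forall>c. (\<Sum>i\<in>A. c i *\<^sub>R a i) = 0 \<longrightarrow> (\<forall>i\<in>A. c i = 0)"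
    and hyp: "\<And>d. (\<forall>i\<in>A. a i \<bullet> d \<le> 0) \<Longrightarrow> c \<bullet> d \<ge> 0"
  shows "\<exists>l. (\<forall>i\<in>A. l i \<ge> 0) \<and> c = - (\<Sum>i\<in>A. l i *\<^sub>R a i)"
proof -
  obtain p r where p: "p \<in> span (a ` A)"
    and r: "\<And>w. w \<in> span (a ` A) \<Longrightarrow> orthogonal r w" and e: "c = p + r"
    using orthogonal_subspace_decomp_exists by blast
  have "\<forall>i\<in>A. a i \<bullet> (-r) \<le> 0"
    using r by (auto simp: span_base orthogonal_def inner_commute)
      (metis imageI inner_commute span_base order_refl)
  then have "c \<bullet> (-r) \<ge> 0" by (rule hyp)
  moreover have "c \<bullet> (-r) = - (r \<bullet> r)"
    using e r[OF p] by (simp add: orthogonal_def inner_add_left inner_add_right inner_commute)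
  ultimately have "r \<bullet> r \<le> 0" by simp
  then have "r = 0" by (metis inner_eq_zero_iff inner_ge_zero order_antisym)
  then have "c \<in> span (a ` A)" using e p by simp
  then obtain m where m: "c = (\<Sum>i\<in>A. m i *\<^sub>R a i)"
    using span_image_repr[OF fin] by blast
  have "m j \<le> 0" if j: "j \<in> A" for j
  proof -
    obtain d where d: "a j \<bullet> d = 1" "\<forall>i\<in>A-{j}. a i \<bullet> d = 0"
      using dual_vector[OF fin j ind] by blast
    have "\<forall>i\<in>A. a i \<bullet> (-d) \<le> 0" using d by (metis Diff_iff empty_iff insert_iff inner_minus_right neg_le_0_iff_le order_refl zero_le_one neg_0_le_iff_le)
    then have "c \<bullet> (-d) \<ge> 0" by (rule hyp)
    moreover have "c \<bullet> d = (\<Sum>i\<in>A. m i * (a i \<bullet> d))"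
      using m by (simp add: inner_sum_left)
    moreover have "(\<Sum>i\<in>A. m i * (a i \<bullet> d)) = m j * (a j \<bullet> d) + (\<Sum>i\<in>A-{j}. m i * (a i \<bullet> d))"
      using fin j by (simp add: sum.remove)
    ultimately show ?thesis using d by simp
  qed
  then show ?thesis
    by (intro exI[of _ "\<lambda>i. - m i"]) (auto simp: m sum_negf)
qed


lemma dir_deriv:
  fixes f :: "'b::real_normed_vector \<Rightarrow> real"
  assumes "(f has_derivative D) (at y)"
  shows "((\<lambda>t. f (y + t *\<^sub>R d)) has_real_derivative D d) (at 0)"
proof -
  have l: "linear D" using assms has_derivative_linear by blast
  have 1: "((\<lambda>t. y + t *\<^sub>R d) has_derivative (\<lambda>t. t *\<^sub>R d)) (at 0)"
    by (auto intro!: derivative_eq_intros)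
  have 2: "(f has_derivative D) (at ((\<lambda>t. y + t *\<^sub>R d) 0))" using assms by simp
  have "((f \<circ> (\<lambda>t. y + t *\<^sub>R d)) has_derivative (D \<circ> (\<lambda>t. t *\<^sub>R d))) (at 0)"
    by (rule diff_chain_at[OF 1 2])
  moreover have "(D \<circ> (\<lambda>t. t *\<^sub>R d)) = (*) (D d)"
    using linear_cmul[OF l] by (auto simp: fun_eq_iff)
  ultimately show ?thesis by (simp add: has_field_derivative_def o_def)
qed

lemma linear_grad:
  fixes L :: "'b::euclidean_space \<Rightarrow> real"
  assumes "linear L"
  shows "L v = (\<Sum>b\<in>Basis. L b *\<^sub>R b) \<bullet> v"
proof -
  have "L v = L (\<Sum>b\<in>Basis. (v \<bullet> b) *\<^sub>R b)" by (simp add: euclidean_representation)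
  also have "\<dots> = (\<Sum>b\<in>Basis. (v \<bullet> b) * L b)"
    using assms by (simp add: linear_sum linear_cmul)
  also have "\<dots> = (\<Sum>b\<in>Basis. L b *\<^sub>R b) \<bullet> v"
    by (simp add: inner_sum_left) (metis inner_commute mult.commute)
  finally show ?thesis .
qed

lemma kkt_exists:
  fixes g :: "'b::euclidean_space \<Rightarrow> real" and h :: "nat \<Rightarrow> 'b \<Rightarrow> real"
  assumes feas: "\<forall>i<k. h i y \<le> 0"
    and opt: "\<forall>y'. (\<forall>i<k. h i y' \<le> 0) \<longrightarrow> g y \<le> g y'"
    and dg: "(g has_derivative Dg) (at y)"
    and dh: "\<forall>i<k. (h i has_derivative Dh i) (at y)"
    and cvx: "\<forall>i<k. convex_on UNIV (h i)"
    and slater: "\<forall>i<k. h i y1 < 0"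
    and licq: "\<forall>c. (\<forall>v. (\<Sum>i\<in>{i. i<k \<and> h i y = 0}. c i * Dh i v) = 0) \<longrightarrow> (\<forall>i. i<k \<and> h i y = 0 \<longrightarrow> c i = 0)"
  shows "\<exists>lam. (\<forall>i\<ge>k. lam i = 0) \<and> (\<forall>i<k. lam i \<ge> 0 \<and> lam i * h i y = 0) \<and>
           (\<forall>v. Dg v + (\<Sum>i<k. lam i * Dh i v) = 0)"
proof -
  define A where "A = {i. i<k \<and> h i y = 0}"
  have finA: "finite A" unfolding A_def by auto
  define a where "a i = (\<Sum>b\<in>Basis. Dh i b *\<^sub>R b)" for i
  define c where "c = (\<Sum>b\<in>Basis. Dg b *\<^sub>R b)"
  have ldg: "linear Dg" using dg has_derivative_linear by blast
  have ldh: "linear (Dh i)" if "i<k" for i using dh that has_derivative_linear by blast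
  have Dgc: "Dg v = c \<bullet> v" for v unfolding c_def by (rule linear_grad[OF ldg])
  have Dha: "Dh i v = a i \<bullet> v" if "i<k" for i v unfolding a_def by (rule linear_grad[OF ldh[OF that]])
  have inact: "h i y < 0" if "i<k" "i \<notin> A" for i using feas that unfolding A_def by force
  have stepa: "c \<bullet> d \<ge> 0" if d: "\<forall>i\<in>A. a i \<bullet> d < 0" for d
  proof (rule ccontr)
    assume "\<not> c \<bullet> d \<ge> 0"
    then have neg: "Dg d < 0" using Dgc by simp
    have ev1: "eventually (\<lambda>t. g (y + t *\<^sub>R d) < g y) (at_right 0)"
    proof -
      obtain e where "e > 0" "\<forall>t>0. t < e \<longrightarrow> g (y + t *\<^sub>R d) < g y"
        using DERIV_neg_dec_right[OF dir_deriv[OF dg] neg] by auto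
      then show ?thesis unfolding eventually_at_right_field by blast
    qed
    have ev2: "eventually (\<lambda>t. h i (y + t *\<^sub>R d) < 0) (at_right 0)" if i: "i < k" for i
    proof (cases "i \<in> A")
      case True
      then have "Dh i d < 0" using d Dha i by auto
      moreover have hy: "h i y = 0" using True unfolding A_def by auto
      moreover have "(h i has_derivative Dh i) (at y)" using dh i by auto
      ultimately obtain e where "e > 0" "\<forall>t>0. t < e \<longrightarrow> h i (y + t *\<^sub>R d) < 0"
        using DERIV_neg_dec_right[OF dir_deriv[of "h i" "Dh i" y d]] by auto
      then show ?thesis unfolding eventually_at_right_field by blast
    next
      case False
      have "(h i has_derivative Dh i) (at y)" using dh i by auto
      then have "isCont (\<lambda>t. h i (y + t *\<^sub>R d)) 0"
        using DERIV_isCont[OF dir_deriv[of "h i" "Dh i" y d]] by auto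
      then have "((\<lambda>t. h i (y + t *\<^sub>R d)) \<longlongrightarrow> h i y) (at 0)"
        unfolding isCont_def by simp
      then have "((\<lambda>t. h i (y + t *\<^sub>R d)) \<longlongrightarrow> h i y) (at_right 0)"
        by (rule tendsto_within_subset) auto
      then show ?thesis using order_tendstoD(2) inact[OF i False] by blast
    qed
    have "eventually (\<lambda>t. g (y + t *\<^sub>R d) < g y \<and> (\<forall>i\<in>{..<k}. h i (y + t *\<^sub>R d) < 0)) (at_right 0)"
      using ev1 ev2 by (auto intro!: eventually_conj eventually_ball_finite)
    then obtain t where "g (y + t *\<^sub>R d) < g y" "\<forall>i<k. h i (y + t *\<^sub>R d) < 0"
      using eventually_happens'[OF trivial_limit_at_right_real] by fastforce
    then show False using opt by (meson less_imp_le not_le)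
  qed
  define d0 where "d0 = y1 - y"
  have slat: "a i \<bullet> d0 < 0" if i: "i \<in> A" for i
  proof -
    have ik: "i < k" and hy: "h i y = 0" using i unfolding A_def by auto
    have "Dh i d0 \<le> h i y1"
    proof (rule ccontr)
      assume "\<not> Dh i d0 \<le> h i y1"
      then have pos: "Dh i d0 - h i y1 > 0" by simp
      have "((\<lambda>t. h i (y + t *\<^sub>R d0) - t * h i y1) has_real_derivative (Dh i d0 - h i y1)) (at 0)"
        using dir_deriv[of "h i" "Dh i" y d0] dh ik
        by (auto intro!: derivative_eq_intros)
      from DERIV_pos_inc_right[OF this pos] obtain e where e: "e > 0"
        "\<And>t. t > 0 \<Longrightarrow> t < e \<Longrightarrow> 0 < h i (y + t *\<^sub>R d0) - t * h i y1"
        using hy by force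
      define t where "t = min (e/2) 1"
      have t: "t > 0" "t < e" "t \<le> 1" using e(1) unfolding t_def by auto
      have "h i ((1 - t) *\<^sub>R y + t *\<^sub>R y1) \<le> (1 - t) * h i y + t * h i y1"
        using convex_onD[OF cvx[rule_format, OF ik], of t y y1] t by auto
      moreover have "(1 - t) *\<^sub>R y + t *\<^sub>R y1 = y + t *\<^sub>R d0"
        unfolding d0_def by (simp add: algebra_simps)
      ultimately show False using e(2)[OF t(1) t(2)] hy by simp
    qed
    then show ?thesis using slater ik Dha[OF ik] by force
  qed
  have stepc: "c \<bullet> d \<ge> 0" if d: "\<forall>i\<in>A. a i \<bullet> d \<le> 0" for d
  proof (rule ccontr)
    assume "\<not> c \<bullet> d \<ge> 0"
    then have cd: "c \<bullet> d < 0" by simp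
    define ep where "ep = (- (c \<bullet> d)) / (2 * (\<bar>c \<bullet> d0\<bar> + 1))"
    have "2 * (\<bar>c \<bullet> d0\<bar> + 1) > 0" by (simp add: add_nonneg_pos)
    then have ep: "ep > 0" unfolding ep_def using cd by (intro divide_pos_pos) auto
    have "\<forall>i\<in>A. a i \<bullet> (d + ep *\<^sub>R d0) < 0"
      using d slat ep by (simp add: inner_add_right add_nonpos_neg mult_pos_neg)
    then have "c \<bullet> (d + ep *\<^sub>R d0) \<ge> 0" by (rule stepa)
    then have "c \<bullet> d + ep * (c \<bullet> d0) \<ge> 0" by (simp add: inner_add_right)
    moreover have "ep * \<bar>c \<bullet> d0\<bar> < - (c \<bullet> d)"
    proof -
      have "ep * \<bar>c \<bullet> d0\<bar> \<le> ep * (\<bar>c \<bullet> d0\<bar> + 1)" using ep by simp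
      also have "\<dots> = - (c \<bullet> d) / 2" unfolding ep_def by (simp add: field_simps)
      also have "\<dots> < - (c \<bullet> d)" using cd by simp
      finally show ?thesis .
    qed
    moreover have "ep * (c \<bullet> d0) \<le> ep * \<bar>c \<bullet> d0\<bar>"
    proof -
      have "c \<bullet> d0 \<le> \<bar>c \<bullet> d0\<bar>" by simp
      from mult_left_mono[OF this, of ep] ep show ?thesis by simp
    qed
    ultimately show False by linarith
  qed
  have ind: "\<forall>cc. (\<Sum>i\<in>A. cc i *\<^sub>R a i) = 0 \<longrightarrow> (\<forall>i\<in>A. cc i = 0)"
  proof (intro allI impI)
    fix cc assume s: "(\<Sum>i\<in>A. cc i *\<^sub>R a i) = 0"
    have "\<forall>v. (\<Sum>i\<in>A. cc i * Dh i v) = 0"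
    proof
      fix v
      have "(\<Sum>i\<in>A. cc i * Dh i v) = (\<Sum>i\<in>A. cc i * (a i \<bullet> v))"
        by (rule sum.cong) (auto simp: A_def Dha)
      also have "\<dots> = (\<Sum>i\<in>A. cc i *\<^sub>R a i) \<bullet> v" by (simp add: inner_sum_left)
      finally show "(\<Sum>i\<in>A. cc i * Dh i v) = 0" using s by simp
    qed
    then show "\<forall>i\<in>A. cc i = 0" using licq unfolding A_def by blast
  qed
  obtain l where l: "\<forall>i\<in>A. l i \<ge> 0" "c = - (\<Sum>i\<in>A. l i *\<^sub>R a i)"
    using farkas_indep[OF finA ind stepc] by blast
  define lam where "lam i = (if i \<in> A then l i else 0)" for i
  show ?thesis
  proof (intro exI[of _ lam] conjI)
    show "\<forall>i\<ge>k. lam i = 0" unfolding lam_def A_def by auto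
  next
    show "\<forall>i<k. 0 \<le> lam i \<and> lam i * h i y = 0"
      unfolding lam_def using l(1) by (auto simp: A_def)
  next
    show "\<forall>v. Dg v + (\<Sum>i<k. lam i * Dh i v) = 0"
    proof
      fix v
      have "(\<Sum>i<k. lam i * Dh i v) = (\<Sum>i\<in>{i\<in>{..<k}. h i y = 0}. l i * Dh i v)"
      proof -
        have "(\<Sum>i\<in>{i\<in>{..<k}. h i y = 0}. l i * Dh i v) = (\<Sum>i<k. if h i y = 0 then l i * Dh i v else 0)"
          by (rule sum.inter_filter) simp
        also have "\<dots> = (\<Sum>i<k. lam i * Dh i v)"
          by (rule sum.cong) (auto simp: lam_def A_def)
        finally show ?thesis by simp
      qed
      also have "{i\<in>{..<k}. h i y = 0} = A" unfolding A_def by auto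
      also have "(\<Sum>i\<in>A. l i * Dh i v) = (\<Sum>i\<in>A. l i *\<^sub>R a i) \<bullet> v"
        by (auto simp: inner_sum_left A_def Dha intro!: sum.cong)
      finally show "Dg v + (\<Sum>i<k. lam i * Dh i v) = 0" using Dgc l(2) by simp
    qed
  qed
qed


definition gradY :: "(('a::euclidean_space \<times> 'b::euclidean_space) \<Rightarrow>\<^sub>L real) \<Rightarrow> 'b" where
  "gradY D = (\<Sum>b\<in>Basis. blinfun_apply D (0, b) *\<^sub>R b)"

lemma linear_Dy: "linear (\<lambda>v. blinfun_apply D (0::'a::real_normed_vector, v))"
proof -
  have "linear (\<lambda>v::'b. (0::'a, v))" by (intro linearI) auto
  then show ?thesis using linear_compose[of "\<lambda>v. (0::'a, v)" "blinfun_apply D"]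
    by (simp add: o_def bounded_linear.linear[OF blinfun.bounded_linear_right])
qed

lemma gradY_inner: "gradY D \<bullet> v = blinfun_apply D (0, v)"
  unfolding gradY_def using linear_grad[OF linear_Dy, of D v] by simp

lemma bounded_linear_gradY: "bounded_linear gradY"
  unfolding gradY_def
  by (intro bounded_linear_sum bounded_linear_compose[OF bounded_linear_scaleR_left]
      bounded_bilinear.bounded_linear_left[OF bounded_bilinear_blinfun_apply])

lemma partial_y:
  assumes "(F has_derivative blinfun_apply D) (at (x, y))"
  shows "((\<lambda>y. F (x, y)) has_derivative (\<lambda>v. blinfun_apply D (0, v))) (at y)"
proof -
  have 1: "((\<lambda>y. (x, y)) has_derivative (\<lambda>v. (0, v))) (at y)"
    by (auto intro!: derivative_eq_intros)
  have "((F \<circ> (\<lambda>y. (x, y))) has_derivative (blinfun_apply D \<circ> (\<lambda>v. (0, v)))) (at y)"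
    by (rule diff_chain_at[OF 1]) (use assms in simp)
  then show ?thesis by (simp add: o_def)
qed

lemma gradY_deriv:
  assumes "(F' has_derivative blinfun_apply (F'' z)) (at z)"
  shows "((\<lambda>z. gradY (F' z)) has_derivative (\<lambda>dz. gradY (blinfun_apply (F'' z) dz))) (at z)"
  using bounded_linear.has_derivative[OF bounded_linear_gradY assms] .


lemma convex_first_order:
  fixes \<phi> :: "'b::real_normed_vector \<Rightarrow> real"
  assumes cvx: "convex_on UNIV \<phi>" and d: "(\<phi> has_derivative D) (at y)"
  shows "\<phi> y' \<ge> \<phi> y + D (y' - y)"
proof (rule ccontr)
  assume "\<not> \<phi> y' \<ge> \<phi> y + D (y' - y)"
  then have pos: "D (y' - y) - (\<phi> y' - \<phi> y) > 0" by simp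
  have "((\<lambda>t. \<phi> (y + t *\<^sub>R (y' - y)) - t * (\<phi> y' - \<phi> y)) has_real_derivative (D (y' - y) - (\<phi> y' - \<phi> y))) (at 0)"
    using dir_deriv[OF d, of "y' - y"] by (auto intro!: derivative_eq_intros)
  from DERIV_pos_inc_right[OF this pos] obtain e where e: "e > 0"
    "\<And>t. t > 0 \<Longrightarrow> t < e \<Longrightarrow> \<phi> y < \<phi> (y + t *\<^sub>R (y' - y)) - t * (\<phi> y' - \<phi> y)"
    by force
  define t where "t = min (e/2) 1"
  have t: "t > 0" "t < e" "t \<le> 1" using e(1) unfolding t_def by auto
  have "\<phi> ((1 - t) *\<^sub>R y + t *\<^sub>R y') \<le> (1 - t) * \<phi> y + t * \<phi> y'"
    using convex_onD[OF cvx, of t y y'] t by auto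
  moreover have "(1 - t) *\<^sub>R y + t *\<^sub>R y' = y + t *\<^sub>R (y' - y)"
    by (simp add: algebra_simps)
  ultimately show False using e(2)[OF t(1) t(2)] by (simp add: algebra_simps)
qed

lemma convex_hess:
  fixes \<phi> :: "'b::real_normed_vector \<Rightarrow> real"
  assumes cvx: "convex_on UNIV \<phi>" and d: "\<And>y. (\<phi> has_derivative D y) (at y)"
    and q: "((\<lambda>t. D (y + t *\<^sub>R v) v) has_real_derivative q) (at 0)"
  shows "q \<ge> 0"
proof (rule ccontr)
  assume "\<not> q \<ge> 0"
  then have "q < 0" by simp
  from DERIV_neg_dec_right[OF q this] obtain e where e: "e > 0"
    "\<And>t. t > 0 \<Longrightarrow> t < e \<Longrightarrow> D (y + t *\<^sub>R v) v < D y v" by force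
  define t where "t = e/2"
  have t: "t > 0" "t < e" using e(1) unfolding t_def by auto
  have l1: "linear (D y)" using d has_derivative_linear by blast
  have l2: "linear (D (y + t *\<^sub>R v))" using d has_derivative_linear by blast
  have 1: "\<phi> (y + t *\<^sub>R v) \<ge> \<phi> y + t * D y v"
    using convex_first_order[OF cvx d[of y], of "y + t *\<^sub>R v"] linear_cmul[OF l1] by simp
  have 2: "\<phi> y \<ge> \<phi> (y + t *\<^sub>R v) - t * D (y + t *\<^sub>R v) v"
    using convex_first_order[OF cvx d[of "y + t *\<^sub>R v"], of y] linear_cmul[OF l2, of "-t" v] by simp
  from 1 2 have "t * D y v \<le> t * D (y + t *\<^sub>R v) v" by simp
  then have "D y v \<le> D (y + t *\<^sub>R v) v" using t(1) by simp
  then show False using e(2)[OF t] by simp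
qed

lemma norm_convex_identity:
  fixes a b :: "'b::real_inner"
  shows "(t *\<^sub>R a + (1 - t) *\<^sub>R b) \<bullet> (t *\<^sub>R a + (1 - t) *\<^sub>R b) =
    t * (a \<bullet> a) + (1 - t) * (b \<bullet> b) - t * (1 - t) * ((a - b) \<bullet> (a - b))"
  by (simp add: inner_add_left inner_add_right inner_diff_left inner_diff_right inner_commute algebra_simps)

lemma strongly_convex_shift:
  assumes "strongly_convex \<mu> \<phi>"
  shows "convex_on UNIV (\<lambda>y. \<phi> y - \<mu> / 2 * (y \<bullet> y))"
proof (rule convex_onI)
  fix t :: real and x y :: 'a assume t: "t > 0" "t < 1"
  have sc: "\<phi> ((1 - t) *\<^sub>R x + (1 - (1 - t)) *\<^sub>R y) \<le> (1 - t) * \<phi> x + (1 - (1 - t)) * \<phi> y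
      - \<mu> / 2 * (1 - t) * (1 - (1 - t)) * (norm (x - y))\<^sup>2"
  proof -
    have "\<forall>a b t. 0 \<le> t \<and> t \<le> 1 \<longrightarrow> \<phi> (t *\<^sub>R a + (1 - t) *\<^sub>R b)
         \<le> t * \<phi> a + (1 - t) * \<phi> b - \<mu> / 2 * t * (1 - t) * (norm (a - b))\<^sup>2"
      using assms unfolding strongly_convex_def by blast
    from this[rule_format, of "1 - t" x y] t show ?thesis by simp
  qed
  have n: "((1 - t) *\<^sub>R x + (1 - (1 - t)) *\<^sub>R y) \<bullet> ((1 - t) *\<^sub>R x + (1 - (1 - t)) *\<^sub>R y)
     = (1 - t) * (x \<bullet> x) + (1 - (1 - t)) * (y \<bullet> y) - (1 - t) * (1 - (1 - t)) * ((x - y) \<bullet> (x - y))"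
    by (rule norm_convex_identity)
  define u where "u = (1 - t) *\<^sub>R x + t *\<^sub>R y"
  define N where "N = (x - y) \<bullet> (x - y)"
  have N: "(norm (x - y))\<^sup>2 = N" unfolding N_def by (simp add: power2_norm_eq_inner)
  have sc': "\<phi> u \<le> (1 - t) * \<phi> x + t * \<phi> y - \<mu> / 2 * ((1 - t) * t * N)"
    using sc N unfolding u_def by (simp add: mult.assoc)
  have n': "\<mu> / 2 * (u \<bullet> u) = \<mu> / 2 * ((1 - t) * (x \<bullet> x)) + \<mu> / 2 * (t * (y \<bullet> y)) - \<mu> / 2 * ((1 - t) * t * N)"
  proof -
    have n2: "u \<bullet> u = (1 - t) * (x \<bullet> x) + t * (y \<bullet> y) - (1 - t) * t * N"
      using n unfolding u_def N_def by simp
    show ?thesis by (simp only: n2) (simp add: algebra_simps)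
  qed
  have e1: "(1 - t) * (\<phi> x - \<mu> / 2 * (x \<bullet> x)) + t * (\<phi> y - \<mu> / 2 * (y \<bullet> y)) =
     (1 - t) * \<phi> x + t * \<phi> y - \<mu> / 2 * ((1 - t) * (x \<bullet> x)) - \<mu> / 2 * (t * (y \<bullet> y))"
    by (simp add: field_simps)
  have "\<phi> u - \<mu> / 2 * (u \<bullet> u) \<le> (1 - t) * (\<phi> x - \<mu> / 2 * (x \<bullet> x)) + t * (\<phi> y - \<mu> / 2 * (y \<bullet> y))"
    using sc' n' e1 by linarith
  then show "\<phi> ((1 - t) *\<^sub>R x + t *\<^sub>R y) - \<mu> / 2 * (((1 - t) *\<^sub>R x + t *\<^sub>R y) \<bullet> ((1 - t) *\<^sub>R x + t *\<^sub>R y))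
      \<le> (1 - t) * (\<phi> x - \<mu> / 2 * (x \<bullet> x)) + t * (\<phi> y - \<mu> / 2 * (y \<bullet> y))"
    unfolding u_def .
qed simp

lemma strongly_convex_convex:
  assumes "strongly_convex \<mu> \<phi>"
  shows "convex_on UNIV \<phi>"
proof (rule convex_onI)
  fix t :: real and x y :: 'a assume t: "t > 0" "t < 1"
  have sc: "\<phi> ((1 - t) *\<^sub>R x + (1 - (1 - t)) *\<^sub>R y) \<le> (1 - t) * \<phi> x + (1 - (1 - t)) * \<phi> y
      - \<mu> / 2 * (1 - t) * (1 - (1 - t)) * (norm (x - y))\<^sup>2"
  proof -
    have "\<forall>a b t. 0 \<le> t \<and> t \<le> 1 \<longrightarrow> \<phi> (t *\<^sub>R a + (1 - t) *\<^sub>R b)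
         \<le> t * \<phi> a + (1 - t) * \<phi> b - \<mu> / 2 * t * (1 - t) * (norm (a - b))\<^sup>2"
      using assms unfolding strongly_convex_def by blast
    from this[rule_format, of "1 - t" x y] t show ?thesis by simp
  qed
  have "\<mu> / 2 * (1 - t) * (1 - (1 - t)) * (norm (x - y))\<^sup>2 \<ge> 0"
    using assms t unfolding strongly_convex_def by simp
  with sc show "\<phi> ((1 - t) *\<^sub>R x + t *\<^sub>R y) \<le> (1 - t) * \<phi> x + t * \<phi> y" by simp
qed simp

lemma strong_growth:
  fixes \<phi> :: "'b::euclidean_space \<Rightarrow> real"
  assumes sc: "strongly_convex \<mu> \<phi>" and d: "(\<phi> has_derivative D) (at y1)"
  shows "\<phi> y \<ge> \<phi> y1 + D (y - y1) + \<mu> / 2 * ((y - y1) \<bullet> (y - y1))"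
proof -
  have "((\<lambda>y. \<phi> y - \<mu> / 2 * (y \<bullet> y)) has_derivative (\<lambda>v. D v - \<mu> / 2 * (y1 \<bullet> v + v \<bullet> y1))) (at y1)"
    using d by (auto intro!: derivative_eq_intros)
  from convex_first_order[OF strongly_convex_shift[OF sc] this, of y]
  show ?thesis by (simp add: inner_diff_left inner_diff_right inner_commute algebra_simps)
qed

lemma sc_min_exists:
  fixes \<phi> :: "'b::euclidean_space \<Rightarrow> real"
  assumes sc: "strongly_convex \<mu> \<phi>" and d: "(\<phi> has_derivative D) (at y1)"
    and cont: "continuous_on UNIV \<phi>" and S: "closed S" "y1 \<in> S"
  shows "\<exists>y\<in>S. \<forall>y'\<in>S. \<phi> y \<le> \<phi> y'"
proof -
  have mu: "\<mu> > 0" using sc unfolding strongly_convex_def by simp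
  have l: "linear D" using d has_derivative_linear by blast
  define c where "c = (\<Sum>b\<in>Basis. D b *\<^sub>R b)"
  have Dc: "D v = c \<bullet> v" for v unfolding c_def by (rule linear_grad[OF l])
  define R where "R = 2 * norm c / \<mu>"
  define K where "K = S \<inter> cball y1 R"
  have K: "compact K" unfolding K_def using S(1) by (intro closed_Int_compact) auto
  have "y1 \<in> K" unfolding K_def R_def using S mu by auto
  then obtain y where y: "y \<in> K" "\<forall>y'\<in>K. \<phi> y \<le> \<phi> y'"
    using continuous_attains_inf[OF K _ continuous_on_subset[OF cont]] by blast
  have "\<phi> y \<le> \<phi> y'" if y': "y' \<in> S" for y'
  proof (cases "y' \<in> K")
    case True then show ?thesis using y by auto
  next
    case False
    define r where "r = norm (y' - y1)"
    have r: "r > R" using False y' unfolding K_def r_def by (auto simp: dist_norm norm_minus_commute)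
    have "\<phi> y' \<ge> \<phi> y1 + c \<bullet> (y' - y1) + \<mu> / 2 * r\<^sup>2"
      using strong_growth[OF sc d, of y'] unfolding r_def by (simp add: Dc power2_norm_eq_inner)
    moreover have "c \<bullet> (y' - y1) \<ge> - (norm c * r)"
      unfolding r_def using norm_cauchy_schwarz[of "-c" "y' - y1"] by simp
    moreover have "\<mu> / 2 * r\<^sup>2 - norm c * r > 0"
    proof -
      have "r > 0" using r unfolding R_def using mu by (smt (verit) divide_nonneg_pos norm_ge_zero)
      moreover have "\<mu> / 2 * r > norm c" using r mu unfolding R_def by (simp add: field_simps)
      ultimately have "r * (\<mu> / 2 * r - norm c) > 0" by simp
      then show ?thesis by (simp add: power2_eq_square algebra_simps)
    qed
    ultimately have "\<phi> y' > \<phi> y1" by linarith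
    moreover have "\<phi> y \<le> \<phi> y1" using y \<open>y1 \<in> K\<close> by auto
    ultimately show ?thesis by simp
  qed
  then show ?thesis using y(1) unfolding K_def by auto
qed


lemma ift_wrap:
  fixes \<Phi> :: "'c::euclidean_space \<Rightarrow> 'c"
  assumes der: "\<And>z. (\<Phi> has_derivative D\<Phi> z) (at z)"
    and cont: "\<And>u. continuous_on UNIV (\<lambda>z. D\<Phi> z u)"
    and inj: "inj (D\<Phi> z0)"
  obtains U V \<Psi> where "open U" "z0 \<in> U" "open V" "\<Phi> z0 \<in> V"
    "\<And>v. v \<in> V \<Longrightarrow> \<Psi> v \<in> U \<and> \<Phi> (\<Psi> v) = v" "\<And>z. z \<in> U \<Longrightarrow> \<Psi> (\<Phi> z) = z"
    "\<And>v. v \<in> V \<Longrightarrow> \<Psi> differentiable (at v)"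
proof -
  have bl: "bounded_linear (D\<Phi> z)" for z using der has_derivative_bounded_linear by blast
  define f' where "f' z = Blinfun (D\<Phi> z)" for z
  have f'a: "blinfun_apply (f' z) = D\<Phi> z" for z unfolding f'_def using bl bounded_linear_Blinfun_apply by blast
  have derf: "\<And>z. z \<in> UNIV \<Longrightarrow> (\<Phi> has_derivative blinfun_apply (f' z)) (at z)" using der f'a by simp
  have contf: "continuous_on UNIV f'"
    by (rule continuous_on_blinfun_componentwise) (simp add: f'a cont)
  have lin: "linear (D\<Phi> z0)" using bl bounded_linear.linear by blast
  have linv: "linear (inv (D\<Phi> z0))" by (rule inj_linear_imp_inv_linear[OF lin inj])
  define invf where "invf = Blinfun (inv (D\<Phi> z0))"
  have ia: "blinfun_apply invf = inv (D\<Phi> z0)"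
    unfolding invf_def using linv linear_conv_bounded_linear bounded_linear_Blinfun_apply by blast
  have invf: "invf o\<^sub>L f' z0 = id_blinfun"
    by (rule blinfun_eqI) (simp add: ia f'a inv_f_f[OF inj])
  obtain U' V g g' where U': "open U'" "U' \<subseteq> UNIV" "z0 \<in> U'" "open V" "\<Phi> z0 \<in> V"
    "homeomorphism U' V \<Phi> g" "\<And>y. y \<in> V \<Longrightarrow> (g has_derivative (g' y)) (at y)"
    using inverse_function_theorem[OF open_UNIV derf contf UNIV_I invf] by metis
  show ?thesis
  proof (rule that[of U' V g])
    show "open U'" "z0 \<in> U'" "open V" "\<Phi> z0 \<in> V" using U' by auto
    show "\<And>v. v \<in> V \<Longrightarrow> g v \<in> U' \<and> \<Phi> (g v) = v" "\<And>z. z \<in> U' \<Longrightarrow> g (\<Phi> z) = z"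
      using U'(6) unfolding homeomorphism_def by auto
    show "\<And>v. v \<in> V \<Longrightarrow> g differentiable (at v)" using U'(7) differentiable_def by blast
  qed
qed


lemma indep_card_le:
  fixes a :: "nat \<Rightarrow> 'b::euclidean_space"
  assumes fin: "finite A"
    and ind: "\<forall>c. (\<Sum>i\<in>A. c i *\<^sub>R a i) = 0 \<longrightarrow> (\<forall>i\<in>A. c i = 0)"
  shows "card A \<le> DIM('b)"
proof -
  have inj: "inj_on a A"
  proof (rule inj_onI, rule ccontr)
    fix i j assume ij: "i \<in> A" "j \<in> A" "a i = a j" "i \<noteq> j"
    let ?c = "\<lambda>l. if l = i then (1::real) else if l = j then -1 else 0"
    have "(\<Sum>l\<in>A. ?c l *\<^sub>R a l) = (\<Sum>l\<in>A. (if l = i then a i else 0) + (if l = j then - a j else 0))"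
      by (rule sum.cong) (use ij in auto)
    also have "\<dots> = a i - a j" using fin ij by (simp add: sum.distrib)
    finally have "(\<Sum>l\<in>A. ?c l *\<^sub>R a l) = 0" using ij by simp
    from ind[rule_format, of ?c, OF this ij(1)] show False by simp
  qed
  have "independent (a ` A)"
  proof
    assume "dependent (a ` A)"
    then obtain u where u: "\<exists>v\<in>a ` A. u v \<noteq> 0" "(\<Sum>v\<in>a ` A. u v *\<^sub>R v) = 0"
      using dependent_finite[of "a ` A"] fin by auto
    have "(\<Sum>i\<in>A. u (a i) *\<^sub>R a i) = 0" using u(2) sum.reindex[OF inj, of "\<lambda>v. u v *\<^sub>R v"] by simp
    then have "\<forall>i\<in>A. u (a i) = 0" using ind[rule_format, of "\<lambda>i. u (a i)"] by blast
    then show False using u(1) by auto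
  qed
  then have "card (a ` A) \<le> DIM('b)" by (rule independent_card_le)
  then show ?thesis using card_image[OF inj] by simp
qed

lemma basis_combo:
  fixes \<sigma> :: "nat \<Rightarrow> 'b::euclidean_space"
  assumes fin: "finite A" and sb: "\<sigma> ` A \<subseteq> Basis" and inj: "inj_on \<sigma> A"
  shows "j \<in> A \<Longrightarrow> ((\<Sum>i\<in>A. c i *\<^sub>R \<sigma> i) + (\<Sum>b\<in>Basis - \<sigma> ` A. d b *\<^sub>R b)) \<bullet> \<sigma> j = c j"
    and "b0 \<in> Basis - \<sigma> ` A \<Longrightarrow> ((\<Sum>i\<in>A. c i *\<^sub>R \<sigma> i) + (\<Sum>b\<in>Basis - \<sigma> ` A. d b *\<^sub>R b)) \<bullet> b0 = d b0"
proof -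
  assume j: "j \<in> A"
  have sj: "\<sigma> j \<in> Basis" using sb j by auto
  have 1: "(\<Sum>i\<in>A. c i *\<^sub>R \<sigma> i) \<bullet> \<sigma> j = (\<Sum>i\<in>A. if i = j then c i else 0)"
    unfolding inner_sum_left
  proof (rule sum.cong)
    fix i assume i: "i \<in> A"
    have "\<sigma> i \<in> Basis" using sb i by auto
    moreover have "\<sigma> i = \<sigma> j \<longleftrightarrow> i = j" using inj i j by (meson inj_on_eq_iff)
    ultimately show "c i *\<^sub>R \<sigma> i \<bullet> \<sigma> j = (if i = j then c i else 0)"
      using sj by (auto simp: inner_Basis)
  qed simp
  have 2: "(\<Sum>b\<in>Basis - \<sigma> ` A. d b *\<^sub>R b) \<bullet> \<sigma> j = 0"
    unfolding inner_sum_left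
    by (rule sum.neutral) (use sj j in \<open>auto simp: inner_Basis\<close>)
  show "((\<Sum>i\<in>A. c i *\<^sub>R \<sigma> i) + (\<Sum>b\<in>Basis - \<sigma> ` A. d b *\<^sub>R b)) \<bullet> \<sigma> j = c j"
    using 1 2 fin j by (simp add: inner_add_left)
next
  assume b0: "b0 \<in> Basis - \<sigma> ` A"
  have 1: "(\<Sum>i\<in>A. c i *\<^sub>R \<sigma> i) \<bullet> b0 = 0"
    unfolding inner_sum_left
  proof (rule sum.neutral, rule ballI)
    fix i assume i: "i \<in> A"
    have "\<sigma> i \<in> Basis" "\<sigma> i \<noteq> b0" using sb i b0 by auto
    then show "c i *\<^sub>R \<sigma> i \<bullet> b0 = 0" using b0 by (simp add: inner_Basis)
  qed
  have 2: "(\<Sum>b\<in>Basis - \<sigma> ` A. d b *\<^sub>R b) \<bullet> b0 = (\<Sum>b\<in>Basis - \<sigma> ` A. if b = b0 then d b else 0)"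
    unfolding inner_sum_left
    by (rule sum.cong) (use b0 in \<open>auto simp: inner_Basis\<close>)
  show "((\<Sum>i\<in>A. c i *\<^sub>R \<sigma> i) + (\<Sum>b\<in>Basis - \<sigma> ` A. d b *\<^sub>R b)) \<bullet> b0 = d b0"
    using 1 2 b0 by (simp add: inner_add_left)
qed

lemma vec_zero_iff_inner: "(t::'b::real_inner) = 0 \<longleftrightarrow> (\<forall>v. t \<bullet> v = 0)"
  by (metis inner_eq_zero_iff inner_zero_left)

lemma local_kkt:
  fixes g :: "'a::euclidean_space \<Rightarrow> 'b::euclidean_space \<Rightarrow> real" and h :: "nat \<Rightarrow> 'a \<Rightarrow> 'b \<Rightarrow> real"
    and G1 :: "'a \<times> 'b \<Rightarrow> ('a \<times> 'b) \<Rightarrow>\<^sub>L real"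
    and G2 :: "'a \<times> 'b \<Rightarrow> ('a \<times> 'b) \<Rightarrow>\<^sub>L (('a \<times> 'b) \<Rightarrow>\<^sub>L real)"
    and H1 :: "nat \<Rightarrow> 'a \<times> 'b \<Rightarrow> ('a \<times> 'b) \<Rightarrow>\<^sub>L real"
    and H2 :: "nat \<Rightarrow> 'a \<times> 'b \<Rightarrow> ('a \<times> 'b) \<Rightarrow>\<^sub>L (('a \<times> 'b) \<Rightarrow>\<^sub>L real)"
  assumes dG1: "\<And>z. (case_prod g has_derivative blinfun_apply (G1 z)) (at z)"
    and dG2: "\<And>z. (G1 has_derivative blinfun_apply (G2 z)) (at z)"
    and cG2: "continuous_on UNIV G2"
    and dH1: "\<And>i z. i < k \<Longrightarrow> (case_prod (h i) has_derivative blinfun_apply (H1 i z)) (at z)"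
    and dH2: "\<And>i z. i < k \<Longrightarrow> (H1 i has_derivative blinfun_apply (H2 i z)) (at z)"
    and cH2: "\<And>i. i < k \<Longrightarrow> continuous_on UNIV (H2 i)"
    and Ak: "A \<subseteq> {..<k}"
    and act: "\<And>i. i \<in> A \<Longrightarrow> h i x0 y0 = 0"
    and inact: "\<And>i. i < k \<Longrightarrow> i \<notin> A \<Longrightarrow> h i x0 y0 < 0"
    and pos: "\<And>i. i \<in> A \<Longrightarrow> lam0 i > 0"
    and kkt: "\<And>v. G1 (x0, y0) (0, v) + (\<Sum>i\<in>A. lam0 i * H1 i (x0, y0) (0, v)) = 0"
    and licq: "\<forall>c. (\<forall>v. (\<Sum>i\<in>A. c i * H1 i (x0, y0) (0, v)) = 0) \<longrightarrow> (\<forall>i\<in>A. c i = 0)"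
    and qc: "\<And>dy. \<forall>i\<in>A. H1 i (x0, y0) (0, dy) = 0 \<Longrightarrow>
       G2 (x0, y0) (0, dy) (0, dy) + (\<Sum>i\<in>A. lam0 i * H2 i (x0, y0) (0, dy) (0, dy)) = 0 \<Longrightarrow> dy = 0"
  shows "\<exists>e>0. \<exists>Y \<Lambda>. Y differentiable (at x0) \<and> (\<forall>x\<in>ball x0 e.
     (\<forall>i\<in>A. h i x (Y x) = 0 \<and> \<Lambda> x i > 0) \<and> (\<forall>i. i < k \<and> i \<notin> A \<longrightarrow> h i x (Y x) < 0) \<and>
     (\<forall>v. G1 (x, Y x) (0, v) + (\<Sum>i\<in>A. \<Lambda> x i * H1 i (x, Y x) (0, v)) = 0) \<and>
     (\<forall>y'. (\<forall>s\<in>{0..1}. (\<forall>v. G1 (x, Y x + s *\<^sub>R (y' - Y x)) (0, v) +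
              (\<Sum>i\<in>A. \<Lambda> x i * H1 i (x, Y x + s *\<^sub>R (y' - Y x)) (0, v)) = 0)
          \<and> (\<forall>i\<in>A. h i x (Y x + s *\<^sub>R (y' - Y x)) = 0)) \<longrightarrow> y' = Y x))"
proof -
  have finA: "finite A" using Ak finite_subset by blast
  define a where "a i = gradY (H1 i (x0, y0))" for i
  have ind: "\<forall>c. (\<Sum>i\<in>A. c i *\<^sub>R a i) = 0 \<longrightarrow> (\<forall>i\<in>A. c i = 0)"
  proof (intro allI impI)
    fix c assume c: "(\<Sum>i\<in>A. c i *\<^sub>R a i) = 0"
    have "\<forall>v. (\<Sum>i\<in>A. c i * H1 i (x0, y0) (0, v)) = 0"
    proof
      fix v
      have "(\<Sum>i\<in>A. c i * H1 i (x0, y0) (0, v)) = (\<Sum>i\<in>A. c i *\<^sub>R a i) \<bullet> v"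
        by (simp add: inner_sum_left a_def gradY_inner)
      then show "(\<Sum>i\<in>A. c i * H1 i (x0, y0) (0, v)) = 0" using c by simp
    qed
    then show "\<forall>i\<in>A. c i = 0" using licq by blast
  qed
  have "card A \<le> card (Basis :: 'b set)" using indep_card_le[OF finA ind] by simp
  then obtain \<sigma> :: "nat \<Rightarrow> 'b" where \<sigma>: "\<sigma> ` A \<subseteq> Basis" "inj_on \<sigma> A"
    using card_le_inj[OF finA finite_Basis[where 'a='b]] by auto
  define R where "R = Basis - \<sigma> ` A"
  note bc1 = basis_combo(1)[OF finA \<sigma>, folded R_def]
  note bc2 = basis_combo(2)[OF finA \<sigma>, folded R_def]
  define P where "P z = (fst z, fst (snd z))" for z :: "'a \<times> 'b \<times> 'b"
  define \<Phi> where "\<Phi> z = (fst z, gradY (G1 (P z)) + (\<Sum>i\<in>A. (snd (snd z) \<bullet> \<sigma> i) *\<^sub>R gradY (H1 i (P z))),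
        (\<Sum>i\<in>A. case_prod (h i) (P z) *\<^sub>R \<sigma> i) + (\<Sum>b\<in>R. (snd (snd z) \<bullet> b) *\<^sub>R b))" for z
  define D\<Phi> where "D\<Phi> z u = (fst u, gradY (G2 (P z) (P u)) + (\<Sum>i\<in>A. (snd (snd z) \<bullet> \<sigma> i) *\<^sub>R gradY (H2 i (P z) (P u))
          + (snd (snd u) \<bullet> \<sigma> i) *\<^sub>R gradY (H1 i (P z))),
        (\<Sum>i\<in>A. H1 i (P z) (P u) *\<^sub>R \<sigma> i) + (\<Sum>b\<in>R. (snd (snd u) \<bullet> b) *\<^sub>R b))" for z u
  have dP: "(P has_derivative P) (at z)" for z
    unfolding P_def[abs_def] by (auto intro!: derivative_eq_intros)
  have dGY: "((\<lambda>z. gradY (G1 (P z))) has_derivative (\<lambda>u. gradY (G2 (P z) (P u)))) (at z)" for z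
  proof -
    have "(((\<lambda>p. gradY (G1 p)) \<circ> P) has_derivative ((\<lambda>dp. gradY (G2 (P z) dp)) \<circ> P)) (at z)"
      by (rule diff_chain_at[OF dP[of z] gradY_deriv[of G1 G2 "P z", OF dG2[of "P z"]]])
    then show ?thesis by (simp add: o_def)
  qed
  have dAY: "((\<lambda>z. gradY (H1 i (P z))) has_derivative (\<lambda>u. gradY (H2 i (P z) (P u)))) (at z)" if "i \<in> A" for i z
  proof -
    have ik: "i < k" using that Ak by auto
    have "(((\<lambda>p. gradY (H1 i p)) \<circ> P) has_derivative ((\<lambda>dp. gradY (H2 i (P z) dp)) \<circ> P)) (at z)"
      by (rule diff_chain_at[OF dP[of z] gradY_deriv[of "H1 i" "H2 i" "P z", OF dH2[OF ik, of "P z"]]])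
    then show ?thesis by (simp add: o_def)
  qed
  have dHc: "((\<lambda>z. case_prod (h i) (P z)) has_derivative (\<lambda>u. H1 i (P z) (P u))) (at z)" if "i < k" for i z
  proof -
    have "((case_prod (h i) \<circ> P) has_derivative (blinfun_apply (H1 i (P z)) \<circ> P)) (at z)"
      by (rule diff_chain_at[OF dP[of z] dH1[OF that, of "P z"]])
    then show ?thesis by (simp add: o_def)
  qed
  have d\<Phi>: "(\<Phi> has_derivative D\<Phi> z) (at z)" for z
    unfolding \<Phi>_def[abs_def] D\<Phi>_def
    apply (intro has_derivative_Pair has_derivative_add has_derivative_sum has_derivative_scaleR dGY dAY dHc
      has_derivative_fst[OF has_derivative_ident] bounded_linear.has_derivative[OF bounded_linear_inner_left]
      has_derivative_snd has_derivative_ident has_derivative_const)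
      apply simp
     apply (rule bounded_linear.has_derivative[OF bounded_linear_scaleR_left])
     apply (rule dHc) using Ak apply auto[1]
    apply (rule bounded_linear.has_derivative[OF bounded_linear_scaleR_left])
    apply (rule bounded_linear.has_derivative[OF bounded_linear_inner_left])
    apply (rule has_derivative_snd has_derivative_ident)+
    done
  have cP: "continuous_on UNIV P" unfolding P_def[abs_def] by (intro continuous_intros)
  have cG2P: "continuous_on UNIV (\<lambda>z. G2 (P z))" by (rule continuous_on_compose2[OF cG2 cP]) auto
  have cH1: "continuous_on UNIV (H1 i)" if "i < k" for i
    by (rule has_derivative_continuous_on) (use dH2[OF that] in auto)
  have cH1P: "continuous_on UNIV (\<lambda>z. H1 i (P z))" if "i < k" for i
    by (rule continuous_on_compose2[OF cH1[OF that] cP]) auto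
  have cH2P: "continuous_on UNIV (\<lambda>z. H2 i (P z))" if "i < k" for i
    by (rule continuous_on_compose2[OF cH2[OF that] cP]) auto
  note cgY = bounded_linear.continuous_on[OF bounded_linear_gradY]
  have cD\<Phi>: "continuous_on UNIV (\<lambda>z. D\<Phi> z u)" for u
    unfolding D\<Phi>_def
    by (intro continuous_intros cgY cG2P cH1P cH2P) (use Ak in auto)
  define w0 where "w0 = (\<Sum>i\<in>A. lam0 i *\<^sub>R \<sigma> i)"
  have w0s: "w0 \<bullet> \<sigma> j = lam0 j" if "j \<in> A" for j
    using bc1[OF that, of lam0 "\<lambda>_. 0"] unfolding w0_def by simp
  have w0R: "w0 \<bullet> b = 0" if "b \<in> R" for b
    using bc2[OF that, of lam0 "\<lambda>_. 0"] unfolding w0_def by simp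
  define z0 where "z0 = (x0, y0, w0)"
  have Pz0: "P z0 = (x0, y0)" unfolding P_def z0_def by simp
  have gY0: "gradY (0 :: ('a \<times> 'b) \<Rightarrow>\<^sub>L real) = 0" unfolding gradY_def by simp
  have inj: "inj (D\<Phi> z0)"
  proof -
    have lin: "linear (D\<Phi> z0)" using d\<Phi> has_derivative_linear by blast
    show ?thesis unfolding linear_injective_0[OF lin]
    proof (intro allI impI)
      fix u assume u0: "D\<Phi> z0 u = 0"
      obtain dx dy dw where u: "u = (dx, dy, dw)" by (cases u) auto
      have Pu: "P u = (dx, dy)" unfolding P_def u by simp
      have c1: "dx = 0" using u0 unfolding D\<Phi>_def u by (simp add: zero_prod_def)
      have c2: "gradY (G2 (x0, y0) (dx, dy)) + (\<Sum>i\<in>A. (w0 \<bullet> \<sigma> i) *\<^sub>R gradY (H2 i (x0, y0) (dx, dy))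
          + (dw \<bullet> \<sigma> i) *\<^sub>R a i) = 0"
        using u0 unfolding D\<Phi>_def Pz0 Pu unfolding u z0_def a_def by (auto simp: zero_prod_def)
      have c3: "(\<Sum>i\<in>A. H1 i (x0, y0) (dx, dy) *\<^sub>R \<sigma> i) + (\<Sum>b\<in>R. (dw \<bullet> b) *\<^sub>R b) = 0"
        using u0 unfolding D\<Phi>_def Pz0 Pu unfolding u z0_def by (auto simp: zero_prod_def)
      have h1: "\<forall>j\<in>A. H1 j (x0, y0) (0, dy) = 0"
        using bc1[of _ "\<lambda>i. H1 i (x0, y0) (dx, dy)" "\<lambda>b. dw \<bullet> b"] c3 c1 by simp
      have hR: "\<forall>b\<in>R. dw \<bullet> b = 0"
        using bc2[of _ "\<lambda>i. H1 i (x0, y0) (dx, dy)" "\<lambda>b. dw \<bullet> b"] c3 by simp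
      have "(gradY (G2 (x0, y0) (dx, dy)) + (\<Sum>i\<in>A. (w0 \<bullet> \<sigma> i) *\<^sub>R gradY (H2 i (x0, y0) (dx, dy))
          + (dw \<bullet> \<sigma> i) *\<^sub>R a i)) \<bullet> dy =
          G2 (x0, y0) (0, dy) (0, dy) + (\<Sum>i\<in>A. lam0 i * H2 i (x0, y0) (0, dy) (0, dy))"
      proof -
        have "(\<Sum>i\<in>A. (w0 \<bullet> \<sigma> i) *\<^sub>R gradY (H2 i (x0, y0) (dx, dy)) + (dw \<bullet> \<sigma> i) *\<^sub>R a i) \<bullet> dy
           = (\<Sum>i\<in>A. lam0 i * H2 i (x0, y0) (0, dy) (0, dy))"
          unfolding inner_sum_left
          by (rule sum.cong) (use h1 c1 in \<open>auto simp: inner_add_left gradY_inner a_def w0s\<close>)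
        then show ?thesis using c1 by (simp add: inner_add_left gradY_inner)
      qed
      with c2 have "G2 (x0, y0) (0, dy) (0, dy) + (\<Sum>i\<in>A. lam0 i * H2 i (x0, y0) (0, dy) (0, dy)) = 0"
        by simp
      with h1 have dy0: "dy = 0" by (rule qc)
      have "(\<Sum>i\<in>A. (dw \<bullet> \<sigma> i) *\<^sub>R a i) = 0"
        using c2 c1 dy0 by (simp add: zero_prod_def[symmetric] gY0)
      then have ds: "\<forall>i\<in>A. dw \<bullet> \<sigma> i = 0" using ind[rule_format, of "\<lambda>i. dw \<bullet> \<sigma> i"] by blast
      have dw0: "dw = 0"
      proof (rule euclidean_eqI)
        fix b :: 'b assume b: "b \<in> Basis"
        show "dw \<bullet> b = 0 \<bullet> b"
        proof (cases "b \<in> \<sigma> ` A")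
          case True then show ?thesis using ds by auto
        next
          case False then show ?thesis using hR b unfolding R_def by auto
        qed
      qed
      show "u = 0" using c1 dy0 dw0 u by (simp add: zero_prod_def)
    qed
  qed
  have sec_iff: "gradY (G1 p) + (\<Sum>i\<in>A. (w \<bullet> \<sigma> i) *\<^sub>R gradY (H1 i p)) = 0 \<longleftrightarrow>
      (\<forall>v. G1 p (0, v) + (\<Sum>i\<in>A. (w \<bullet> \<sigma> i) * H1 i p (0, v)) = 0)" for p w
  proof -
    have "\<And>v. (gradY (G1 p) + (\<Sum>i\<in>A. (w \<bullet> \<sigma> i) *\<^sub>R gradY (H1 i p))) \<bullet> v =
        G1 p (0, v) + (\<Sum>i\<in>A. (w \<bullet> \<sigma> i) * H1 i p (0, v))"
      by (simp add: inner_add_left inner_sum_left gradY_inner)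
    then show ?thesis using vec_zero_iff_inner[of "gradY (G1 p) + (\<Sum>i\<in>A. (w \<bullet> \<sigma> i) *\<^sub>R gradY (H1 i p))"]
      by simp
  qed
  have \<Phi>z0: "\<Phi> z0 = (x0, 0, 0)"
  proof -
    have "\<forall>v. G1 (x0, y0) (0, v) + (\<Sum>i\<in>A. (w0 \<bullet> \<sigma> i) * H1 i (x0, y0) (0, v)) = 0"
    proof
      fix v
      have "(\<Sum>i\<in>A. (w0 \<bullet> \<sigma> i) * H1 i (x0, y0) (0, v)) = (\<Sum>i\<in>A. lam0 i * H1 i (x0, y0) (0, v))"
        by (rule sum.cong) (auto simp: w0s)
      then show "G1 (x0, y0) (0, v) + (\<Sum>i\<in>A. (w0 \<bullet> \<sigma> i) * H1 i (x0, y0) (0, v)) = 0"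
        using kkt[of v] by simp
    qed
    then have s2: "gradY (G1 (x0, y0)) + (\<Sum>i\<in>A. (w0 \<bullet> \<sigma> i) *\<^sub>R gradY (H1 i (x0, y0))) = 0"
      using sec_iff by blast
    have s3: "(\<Sum>i\<in>A. case_prod (h i) (x0, y0) *\<^sub>R \<sigma> i) + (\<Sum>b\<in>R. (w0 \<bullet> b) *\<^sub>R b) = 0"
    proof -
      have "(\<Sum>i\<in>A. case_prod (h i) (x0, y0) *\<^sub>R \<sigma> i) = 0" by (rule sum.neutral) (use act in auto)
      moreover have "(\<Sum>b\<in>R. (w0 \<bullet> b) *\<^sub>R b) = 0" by (rule sum.neutral) (use w0R in auto)
      ultimately show ?thesis by simp
    qed
    show ?thesis unfolding \<Phi>_def Pz0 using s2 s3 by (simp add: z0_def)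
  qed
  obtain U V \<Psi> where UV: "open U" "z0 \<in> U" "open V" "\<Phi> z0 \<in> V"
    "\<And>v. v \<in> V \<Longrightarrow> \<Psi> v \<in> U \<and> \<Phi> (\<Psi> v) = v" "\<And>z. z \<in> U \<Longrightarrow> \<Psi> (\<Phi> z) = z"
    "\<And>v. v \<in> V \<Longrightarrow> \<Psi> differentiable (at v)"
    using ift_wrap[of \<Phi> D\<Phi> z0, OF d\<Phi> cD\<Phi> inj] by blast
  define q where "q x = (x, 0::'b, 0::'b)" for x :: 'a
  have \<Psi>0: "\<Psi> (q x0) = z0" using UV(6)[OF UV(2)] \<Phi>z0 q_def by simp
  define Y where "Y x = fst (snd (\<Psi> (q x)))" for x
  define W where "W x = snd (snd (\<Psi> (q x)))" for x
  define \<Lambda> where "\<Lambda> x i = W x \<bullet> \<sigma> i" for x i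
  have q0V: "q x0 \<in> V" using UV(4) \<Phi>z0 q_def by simp
  have dq: "(q has_derivative q) (at x)" for x
    unfolding q_def[abs_def] by (auto intro!: derivative_eq_intros simp: zero_prod_def)
  have dPq: "(\<Psi> \<circ> q) differentiable (at x0)"
  proof -
    have "q differentiable (at x0)" using dq differentiable_def by blast
    from differentiable_chain_at[of q x0 \<Psi>, OF this UV(7)[OF q0V]] show ?thesis .
  qed
  have dfs: "((\<lambda>p::'a \<times> 'b \<times> 'b. fst (snd p)) has_derivative (\<lambda>p. fst (snd p))) (at p)" for p
    by (auto intro!: derivative_eq_intros)
  have dY: "Y differentiable (at x0)"
  proof -
    have "((\<lambda>p::'a \<times> 'b \<times> 'b. fst (snd p)) \<circ> (\<Psi> \<circ> q)) differentiable (at x0)"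
    proof -
      have "(\<lambda>p::'a \<times> 'b \<times> 'b. fst (snd p)) differentiable (at ((\<Psi> \<circ> q) x0))" using dfs differentiable_def by blast
      from differentiable_chain_at[OF dPq this] show ?thesis .
    qed
    then show ?thesis unfolding Y_def[abs_def] by (simp add: o_def)
  qed
  have cPq: "isCont (\<lambda>x. \<Psi> (q x)) x0"
    using differentiable_imp_continuous_within[OF dPq] by (simp add: o_def)
  have Yx0: "Y x0 = y0" and Wx0: "W x0 = w0" unfolding Y_def W_def \<Psi>0 z0_def by simp_all
  have cY: "isCont Y x0" unfolding Y_def by (intro continuous_intros cPq)
  have ev1: "eventually (\<lambda>x. q x \<in> V) (at x0)"
  proof -
    have "isCont q x0" unfolding q_def by (intro continuous_intros)
    then have "(q \<longlongrightarrow> q x0) (at x0)" by (simp add: isCont_def)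
    then show ?thesis using topological_tendstoD UV(3) q0V by blast
  qed
  have ev2: "eventually (\<lambda>x. \<forall>i\<in>A. \<Lambda> x i > 0) (at x0)"
  proof (rule eventually_ball_finite[OF finA], rule ballI)
    fix i assume i: "i \<in> A"
    have "isCont (\<lambda>x. \<Lambda> x i) x0" unfolding \<Lambda>_def W_def by (intro continuous_intros cPq)
    then have "((\<lambda>x. \<Lambda> x i) \<longlongrightarrow> lam0 i) (at x0)"
      by (simp add: isCont_def \<Lambda>_def Wx0 w0s[OF i])
    then show "eventually (\<lambda>x. \<Lambda> x i > 0) (at x0)" using order_tendstoD(1) pos[OF i] by blast
  qed
  have ev3: "eventually (\<lambda>x. \<forall>j\<in>{j. j < k \<and> j \<notin> A}. h j x (Y x) < 0) (at x0)"
  proof (rule eventually_ball_finite, simp, rule ballI)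
    fix j assume j: "j \<in> {j. j < k \<and> j \<notin> A}"
    have cH: "isCont (case_prod (h j)) (x0, Y x0)"
      using dH1[of j "(x0, Y x0)"] j has_derivative_continuous by blast
    have "isCont (\<lambda>x. case_prod (h j) (x, Y x)) x0"
    proof -
      have "isCont (\<lambda>x. (x, Y x)) x0" by (intro continuous_intros cY)
      from isCont_o2[where f="\<lambda>x. (x, Y x)" and g="case_prod (h j)" and a=x0, OF this] cH show ?thesis by simp
    qed
    then have "((\<lambda>x. h j x (Y x)) \<longlongrightarrow> h j x0 y0) (at x0)"
      by (simp add: isCont_def Yx0)
    then show "eventually (\<lambda>x. h j x (Y x) < 0) (at x0)" using order_tendstoD(2) inact j by blast
  qed
  obtain e where e: "e > 0" "\<And>x. x \<noteq> x0 \<Longrightarrow> dist x x0 < e \<Longrightarrow>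
      q x \<in> V \<and> (\<forall>i\<in>A. \<Lambda> x i > 0) \<and> (\<forall>j\<in>{j. j < k \<and> j \<notin> A}. h j x (Y x) < 0)"
  proof -
    have "eventually (\<lambda>x. q x \<in> V \<and> (\<forall>i\<in>A. \<Lambda> x i > 0) \<and> (\<forall>j\<in>{j. j < k \<and> j \<notin> A}. h j x (Y x) < 0)) (at x0)"
      using eventually_conj[OF ev1 eventually_conj[OF ev2 ev3]] .
    then obtain d where "d > 0" "\<forall>x\<in>UNIV. x \<noteq> x0 \<and> dist x x0 < d \<longrightarrow>
        q x \<in> V \<and> (\<forall>i\<in>A. \<Lambda> x i > 0) \<and> (\<forall>j\<in>{j. j < k \<and> j \<notin> A}. h j x (Y x) < 0)"
      unfolding eventually_at by blast
    then show ?thesis using that by blast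
  qed
  have props: "q x \<in> V \<and> (\<forall>i\<in>A. \<Lambda> x i > 0) \<and> (\<forall>j\<in>{j. j < k \<and> j \<notin> A}. h j x (Y x) < 0)"
    if "x \<in> ball x0 e" for x
  proof (cases "x = x0")
    case True
    then show ?thesis using q0V pos inact Yx0 by (auto simp: \<Lambda>_def Wx0 w0s)
  next
    case False
    then show ?thesis using e(2)[OF False] that by (auto simp: dist_commute)
  qed
  have main: "(\<forall>i\<in>A. h i x (Y x) = 0 \<and> \<Lambda> x i > 0) \<and> (\<forall>i. i < k \<and> i \<notin> A \<longrightarrow> h i x (Y x) < 0) \<and>
     (\<forall>v. G1 (x, Y x) (0, v) + (\<Sum>i\<in>A. \<Lambda> x i * H1 i (x, Y x) (0, v)) = 0) \<and>
     (\<forall>y'. (\<forall>s\<in>{0..1}. (\<forall>v. G1 (x, Y x + s *\<^sub>R (y' - Y x)) (0, v) +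
              (\<Sum>i\<in>A. \<Lambda> x i * H1 i (x, Y x + s *\<^sub>R (y' - Y x)) (0, v)) = 0)
          \<and> (\<forall>i\<in>A. h i x (Y x + s *\<^sub>R (y' - Y x)) = 0)) \<longrightarrow> y' = Y x)"
    if x: "x \<in> ball x0 e" for x
  proof -
    have pr: "q x \<in> V" "\<forall>i\<in>A. \<Lambda> x i > 0" "\<forall>j\<in>{j. j < k \<and> j \<notin> A}. h j x (Y x) < 0"
      using props[OF x] by auto
    have zU: "\<Psi> (q x) \<in> U" and \<Phi>z: "\<Phi> (\<Psi> (q x)) = q x" using UV(5)[OF pr(1)] by auto
    obtain x1 where z: "\<Psi> (q x) = (x1, Y x, W x)" unfolding Y_def W_def by (metis prod.collapse)
    have Pz: "P (\<Psi> (q x)) = (x1, Y x)" unfolding z P_def by simp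
    have x1: "x1 = x"
      and s2: "gradY (G1 (x1, Y x)) + (\<Sum>i\<in>A. (W x \<bullet> \<sigma> i) *\<^sub>R gradY (H1 i (x1, Y x))) = 0"
      and s3: "(\<Sum>i\<in>A. h i x1 (Y x) *\<^sub>R \<sigma> i) + (\<Sum>b\<in>R. (W x \<bullet> b) *\<^sub>R b) = 0"
      using \<Phi>z unfolding \<Phi>_def Pz unfolding z unfolding q_def by auto
    have kk: "\<forall>v. G1 (x, Y x) (0, v) + (\<Sum>i\<in>A. \<Lambda> x i * H1 i (x, Y x) (0, v)) = 0"
      using s2 sec_iff[of "(x, Y x)" "W x"] x1 unfolding \<Lambda>_def by simp
    have ac: "\<forall>i\<in>A. h i x (Y x) = 0"
      using bc1[of _ "\<lambda>i. h i x (Y x)" "\<lambda>b. W x \<bullet> b"] s3 x1 by simp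
    have WR: "\<forall>b\<in>R. W x \<bullet> b = 0"
      using bc2[of _ "\<lambda>i. h i x (Y x)" "\<lambda>b. W x \<bullet> b"] s3 x1 by simp
    have uq: "\<forall>y'. (\<forall>s\<in>{0..1}. (\<forall>v. G1 (x, Y x + s *\<^sub>R (y' - Y x)) (0, v) +
              (\<Sum>i\<in>A. \<Lambda> x i * H1 i (x, Y x + s *\<^sub>R (y' - Y x)) (0, v)) = 0)
          \<and> (\<forall>i\<in>A. h i x (Y x + s *\<^sub>R (y' - Y x)) = 0)) \<longrightarrow> y' = Y x"
    proof (intro allI impI)
      fix y' assume H: "\<forall>s\<in>{0..1}. (\<forall>v. G1 (x, Y x + s *\<^sub>R (y' - Y x)) (0, v) +
              (\<Sum>i\<in>A. \<Lambda> x i * H1 i (x, Y x + s *\<^sub>R (y' - Y x)) (0, v)) = 0)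
          \<and> (\<forall>i\<in>A. h i x (Y x + s *\<^sub>R (y' - Y x)) = 0)"
      obtain \<epsilon> where ep: "\<epsilon> > 0" "ball (\<Psi> (q x)) \<epsilon> \<subseteq> U"
        using UV(1) zU open_contains_ball by blast
      define d where "d = y' - Y x"
      define s where "s = min 1 (\<epsilon> / (2 * (norm d + 1)))"
      have dpos: "2 * (norm d + 1) > 0" by (simp add: add_nonneg_pos)
      have s: "0 < s" "s \<le> 1" unfolding s_def using ep(1) dpos by auto
      have sd: "s * norm d < \<epsilon>"
      proof -
        have "s * norm d \<le> \<epsilon> / (2 * (norm d + 1)) * norm d"
          by (rule mult_right_mono) (auto simp: s_def)
        also have "\<dots> = \<epsilon> * (norm d / (2 * (norm d + 1)))" by simp
        also have "\<dots> < \<epsilon> * 1"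
          by (rule mult_strict_left_mono) (use ep(1) dpos in \<open>auto simp: field_simps\<close>)
        finally show ?thesis by simp
      qed
      define zs where "zs = (x, Y x + s *\<^sub>R d, W x)"
      have "dist zs (\<Psi> (q x)) = norm (s *\<^sub>R d)"
        unfolding zs_def z x1 by (simp add: dist_Pair_Pair dist_norm)
      then have zsU: "zs \<in> U" using ep(2) sd s(1) by (auto simp: dist_commute)
      have Hs: "(\<forall>v. G1 (x, Y x + s *\<^sub>R d) (0, v) + (\<Sum>i\<in>A. \<Lambda> x i * H1 i (x, Y x + s *\<^sub>R d) (0, v)) = 0)
          \<and> (\<forall>i\<in>A. h i x (Y x + s *\<^sub>R d) = 0)"
        using H s unfolding d_def by auto
      have Pzs: "P zs = (x, Y x + s *\<^sub>R d)" unfolding zs_def P_def by simp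
      have t2: "gradY (G1 (x, Y x + s *\<^sub>R d)) + (\<Sum>i\<in>A. (W x \<bullet> \<sigma> i) *\<^sub>R gradY (H1 i (x, Y x + s *\<^sub>R d))) = 0"
        using Hs sec_iff[of "(x, Y x + s *\<^sub>R d)" "W x"] unfolding \<Lambda>_def by simp
      have t3a: "(\<Sum>i\<in>A. h i x (Y x + s *\<^sub>R d) *\<^sub>R \<sigma> i) = 0"
        by (rule sum.neutral) (use Hs in auto)
      have t3b: "(\<Sum>b\<in>R. (W x \<bullet> b) *\<^sub>R b) = 0"
        by (rule sum.neutral) (use WR in auto)
      have "\<Phi> zs = q x" unfolding \<Phi>_def Pzs using t2 t3a t3b by (simp add: zs_def q_def)
      then have "\<Psi> (q x) = zs" using UV(6)[OF zsU] by simp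
      then have "s *\<^sub>R d = 0" unfolding z zs_def by simp
      then show "y' = Y x" using s(1) unfolding d_def by simp
    qed
    show ?thesis using ac pr(2) pr(3) kk uq by auto
  qed
  show ?thesis
    by (rule exI[of _ e], intro conjI exI[of _ Y] exI[of _ \<Lambda>] e(1) dY ballI main)
qed


lemma kkt_mult_unique:
  assumes licq: "LICQ h k x y" and k1: "KKT_mult g h k x y l1" and k2: "KKT_mult g h k x y l2"
  shows "l1 = l2"
proof
  fix i
  let ?A = "{i. i < k \<and> h i x y = 0}"
  let ?D = "\<lambda>i. frechet_derivative (h i x) (at y)"
  have z1: "l1 i = 0" and z2: "l2 i = 0" if "i < k" "h i x y \<noteq> 0" for i
    using k1 k2 that unfolding KKT_mult_def by auto
  have sums: "(\<Sum>i<k. l j i * ?D i v) = (\<Sum>i\<in>?A. l j i * ?D i v)" if "l j = l1 \<or> l j = l2" for l :: "nat \<Rightarrow> nat \<Rightarrow> real" and j v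
  proof -
    have "(\<Sum>i\<in>?A. l j i * ?D i v) = (\<Sum>i\<in>{i\<in>{..<k}. h i x y = 0}. l j i * ?D i v)"
      by (rule sum.cong) auto
    also have "\<dots> = (\<Sum>i<k. if h i x y = 0 then l j i * ?D i v else 0)" by (rule sum.inter_filter) simp
    also have "\<dots> = (\<Sum>i<k. l j i * ?D i v)"
      by (rule sum.cong) (use that z1 z2 in auto)
    finally show ?thesis by simp
  qed
  have S: "\<forall>v. (\<Sum>i\<in>?A. (l1 i - l2 i) * ?D i v) = 0"
  proof
    fix v
    have e1: "frechet_derivative (g x) (at y) v + (\<Sum>i<k. l1 i * ?D i v) = 0"
      and e2: "frechet_derivative (g x) (at y) v + (\<Sum>i<k. l2 i * ?D i v) = 0"
      using k1 k2 unfolding KKT_mult_def by auto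
    have "(\<Sum>i\<in>?A. (l1 i - l2 i) * ?D i v) = (\<Sum>i\<in>?A. l1 i * ?D i v) - (\<Sum>i\<in>?A. l2 i * ?D i v)"
      by (simp add: left_diff_distrib sum_subtractf)
    also have "\<dots> = (\<Sum>i<k. l1 i * ?D i v) - (\<Sum>i<k. l2 i * ?D i v)"
      using sums[of "\<lambda>_. l1" 0 v] sums[of "\<lambda>_. l2" 0 v] by simp
    finally show "(\<Sum>i\<in>?A. (l1 i - l2 i) * ?D i v) = 0" using e1 e2 by simp
  qed
  have Lc: "\<And>c. (\<forall>v. (\<Sum>i\<in>?A. c i * ?D i v) = 0) \<Longrightarrow> \<forall>i. i < k \<and> h i x y = 0 \<longrightarrow> c i = 0"
    using licq unfolding LICQ_def by blast
  have act: "\<forall>i. i < k \<and> h i x y = 0 \<longrightarrow> l1 i - l2 i = 0"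
    using Lc[of "\<lambda>i. l1 i - l2 i", OF S] by simp
  show "l1 i = l2 i"
  proof (cases "i < k")
    case True
    then show ?thesis using act z1 z2 by (cases "h i x y = 0") auto
  next
    case False
    then show ?thesis using k1 k2 unfolding KKT_mult_def by auto
  qed
qed

lemma kkt_lambda_KKT:
  assumes "LICQ h k x y" "KKT_mult g h k x y l"
  shows "KKT_mult g h k x y (kkt_lambda g h k x y)"
  unfolding kkt_lambda_def
proof (rule theI[of _ l])
  show "KKT_mult g h k x y l" using assms(2) .
  fix l' assume "KKT_mult g h k x y l'"
  then show "l' = l" using kkt_mult_unique[OF assms(1)] assms(2) by blast
qed

lemma hess_dir:
  assumes "(F1 has_derivative blinfun_apply (F2 (x, y))) (at (x, y))"
  shows "((\<lambda>t. blinfun_apply (F1 (x, y + t *\<^sub>R v)) (0, v)) has_real_derivative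
           blinfun_apply (blinfun_apply (F2 (x, y)) (0, v)) (0, v)) (at 0)"
proof -
  have 1: "((\<lambda>t. (x, y + t *\<^sub>R v)) has_derivative (\<lambda>t. (0, t *\<^sub>R v))) (at 0)"
    by (auto intro!: derivative_eq_intros)
  have 2: "(F1 has_derivative blinfun_apply (F2 (x, y))) (at ((\<lambda>t. (x, y + t *\<^sub>R v)) 0))"
    using assms by simp
  have "((F1 \<circ> (\<lambda>t. (x, y + t *\<^sub>R v))) has_derivative (blinfun_apply (F2 (x, y)) \<circ> (\<lambda>t. (0, t *\<^sub>R v)))) (at 0)"
    by (rule diff_chain_at[OF 1 2])
  then have 3: "((\<lambda>t. F1 (x, y + t *\<^sub>R v)) has_derivative (\<lambda>t. F2 (x, y) (0, t *\<^sub>R v))) (at 0)"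
    by (simp add: o_def)
  have "((\<lambda>t. blinfun_apply (F1 (x, y + t *\<^sub>R v)) (0, v)) has_derivative
      (\<lambda>t. blinfun_apply (F2 (x, y) (0, t *\<^sub>R v)) (0, v))) (at 0)"
    using bounded_linear.has_derivative[OF bounded_bilinear.bounded_linear_left[OF bounded_bilinear_blinfun_apply] 3]
    by simp
  moreover have "(\<lambda>t. blinfun_apply (F2 (x, y) (0, t *\<^sub>R v)) (0, v)) = (*) (F2 (x, y) (0, v) (0, v))"
  proof
    fix t :: real
    have e: "blinfun_apply (F2 (x, y)) (0, t *\<^sub>R v) = t *\<^sub>R blinfun_apply (F2 (x, y)) (0, v)"
      using blinfun.scaleR_right[of "F2 (x, y)" t "(0, v)"] by simp
    show "blinfun_apply (F2 (x, y) (0, t *\<^sub>R v)) (0, v) = F2 (x, y) (0, v) (0, v) * t"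
      by (simp add: e blinfun.scaleR_left)
  qed
  ultimately show ?thesis by (simp add: has_field_derivative_def)
qed

lemma kkt_suff:
  fixes \<phi> :: "'b::real_normed_vector \<Rightarrow> real" and hh :: "nat \<Rightarrow> 'b \<Rightarrow> real"
  assumes c\<phi>: "convex_on UNIV \<phi>" and d\<phi>: "(\<phi> has_derivative D\<phi>) (at y)"
    and ch: "\<And>i. i < k \<Longrightarrow> convex_on UNIV (hh i)" and dh: "\<And>i. i \<in> A \<Longrightarrow> (hh i has_derivative Dh i) (at y)"
    and Ak: "A \<subseteq> {..<k}" and act: "\<And>i. i \<in> A \<Longrightarrow> hh i y = 0" and lp: "\<And>i. i \<in> A \<Longrightarrow> \<Lambda> i \<ge> 0"
    and kk: "\<And>v. D\<phi> v + (\<Sum>i\<in>A. \<Lambda> i * Dh i v) = 0"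
    and y': "\<forall>i<k. hh i y' \<le> 0"
  shows "\<phi> y \<le> \<phi> y'"
proof -
  have 1: "\<phi> y' \<ge> \<phi> y + D\<phi> (y' - y)" by (rule convex_first_order[OF c\<phi> d\<phi>])
  have 2: "Dh i (y' - y) \<le> 0" if i: "i \<in> A" for i
  proof -
    have ik: "i < k" using i Ak by auto
    have "hh i y' \<ge> hh i y + Dh i (y' - y)" by (rule convex_first_order[OF ch[OF ik] dh[OF i]])
    moreover have "hh i y' \<le> 0" using y' ik by blast
    ultimately show ?thesis using act[OF i] by simp
  qed
  have "(\<Sum>i\<in>A. \<Lambda> i * Dh i (y' - y)) \<le> 0"
    by (rule sum_nonpos) (use 2 lp in \<open>auto intro: mult_nonneg_nonpos\<close>)
  then show ?thesis using 1 kk[of "y' - y"] by linarith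
qed

lemma sc_unique:
  fixes \<phi> :: "'b::real_normed_vector \<Rightarrow> real"
  assumes sc: "strongly_convex \<mu> \<phi>" and S: "convex S" and y: "y \<in> S" "\<forall>z\<in>S. \<phi> y \<le> \<phi> z"
    and y': "y' \<in> S" "\<forall>z\<in>S. \<phi> y' \<le> \<phi> z"
  shows "y = y'"
proof (rule ccontr)
  assume ne: "y \<noteq> y'"
  define m where "m = (1/2) *\<^sub>R y + (1 - 1/2) *\<^sub>R y'"
  have mS: "m \<in> S" unfolding m_def using S y(1) y'(1) unfolding convex_def by auto
  have mu: "\<mu> > 0" using sc unfolding strongly_convex_def by simp
  have all: "\<forall>a b t. 0 \<le> t \<and> t \<le> 1 \<longrightarrow> \<phi> (t *\<^sub>R a + (1 - t) *\<^sub>R b)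
         \<le> t * \<phi> a + (1 - t) * \<phi> b - \<mu> / 2 * t * (1 - t) * (norm (a - b))\<^sup>2"
    using sc unfolding strongly_convex_def by blast
  have "\<phi> m \<le> (1/2) * \<phi> y + (1 - 1/2) * \<phi> y' - \<mu> / 2 * (1/2) * (1 - 1/2) * (norm (y - y'))\<^sup>2"
    unfolding m_def using all[rule_format, of "1/2" y y'] by simp
  moreover have "\<phi> y = \<phi> y'" using y y' by (meson order_antisym)
  moreover have "\<phi> y \<le> \<phi> m" using y(2) mS by blast
  moreover have "(norm (y - y'))\<^sup>2 > 0" using ne by simp
  ultimately have "\<mu> / 2 * (1/2) * (1 - 1/2) * (norm (y - y'))\<^sup>2 \<le> 0" by simp
  moreover have "\<mu> / 2 * (1/2) * (1 - 1/2) * (norm (y - y'))\<^sup>2 > 0"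
    using mu \<open>(norm (y - y'))\<^sup>2 > 0\<close> by simp
  ultimately show False by simp
qed

lemma Yset_convex:
  assumes "\<And>i. i < k \<Longrightarrow> convex_on UNIV (hh i)"
  shows "convex {y. \<forall>i<k. hh i y \<le> (0::real)}"
proof (rule convexI)
  fix x y u v :: real and a b assume ab: "a \<in> {y. \<forall>i<k. hh i y \<le> 0}" "b \<in> {y. \<forall>i<k. hh i y \<le> 0}"
    and uv: "0 \<le> u" "0 \<le> v" "u + v = 1"
  show "u *\<^sub>R a + v *\<^sub>R b \<in> {y. \<forall>i<k. hh i y \<le> 0}"
  proof (clarify)
    fix i assume i: "i < k"
    have "hh i ((1 - v) *\<^sub>R a + v *\<^sub>R b) \<le> (1 - v) * hh i a + v * hh i b"
      using convex_onD[OF assms[OF i], of v a b] uv by auto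
    moreover have "(1 - v) * hh i a + v * hh i b \<le> 0"
      using ab i uv by (auto intro!: add_nonpos_nonpos mult_nonneg_nonpos)
    moreover have "1 - v = u" using uv by simp
    ultimately show "hh i (u *\<^sub>R a + v *\<^sub>R b) \<le> 0" by simp
  qed
qed

lemma Yset_closed:
  assumes "\<And>i. i < k \<Longrightarrow> continuous_on UNIV (hh i)"
  shows "closed {y. \<forall>i<k. hh i y \<le> (0::real)}"
proof -
  have "{y. \<forall>i<k. hh i y \<le> (0::real)} = (\<Inter>i\<in>{..<k}. {y. hh i y \<le> 0})" by auto
  also have "closed \<dots>"
    by (rule closed_INT) (auto intro!: closed_Collect_le assms continuous_on_const)
  finally show ?thesis .
qed


lemma A1_decomp:
  fixes g :: "'a::euclidean_space \<Rightarrow> 'b::euclidean_space \<Rightarrow> real"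
  assumes "A1 f g h k"
  obtains G1 G2 H1 H2 where
    "\<And>z. (case_prod g has_derivative blinfun_apply (G1 z)) (at z)"
    "\<And>z. (G1 has_derivative blinfun_apply (G2 z)) (at z)"
    "continuous_on UNIV G2"
    "\<And>i z. i < k \<Longrightarrow> (case_prod (h i) has_derivative blinfun_apply (H1 i z)) (at z)"
    "\<And>i z. i < k \<Longrightarrow> (H1 i has_derivative blinfun_apply (H2 i z)) (at z)"
    "\<And>i. i < k \<Longrightarrow> continuous_on UNIV (H2 i)"
proof -
  from assms have g: "C2_fun (case_prod g)" and hs: "\<forall>i<k. C2_fun (case_prod (h i))"
    unfolding A1_def by auto
  obtain G1 G2 where G: "\<forall>z. (case_prod g has_derivative blinfun_apply (G1 z)) (at z)"
    "\<forall>z. (G1 has_derivative blinfun_apply (G2 z)) (at z)" "continuous_on UNIV G2"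
    using g unfolding C2_fun_def by blast
  have "\<forall>i. \<exists>F'. \<exists>F''. i < k \<longrightarrow> ((\<forall>z. (case_prod (h i) has_derivative blinfun_apply (F' z)) (at z)) \<and>
      (\<forall>z. (F' has_derivative blinfun_apply (F'' z)) (at z)) \<and> continuous_on UNIV F'')"
    using hs unfolding C2_fun_def by blast
  then obtain H1 where "\<forall>i. \<exists>F''. i < k \<longrightarrow> ((\<forall>z. (case_prod (h i) has_derivative blinfun_apply (H1 i z)) (at z)) \<and>
      (\<forall>z. (H1 i has_derivative blinfun_apply (F'' z)) (at z)) \<and> continuous_on UNIV F'')"
    by (rule choice[THEN exE])
  then obtain H2 where H: "\<forall>i. i < k \<longrightarrow> ((\<forall>z. (case_prod (h i) has_derivative blinfun_apply (H1 i z)) (at z)) \<and>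
      (\<forall>z. (H1 i has_derivative blinfun_apply (H2 i z)) (at z)) \<and> continuous_on UNIV (H2 i))"
    by (rule choice[THEN exE])
  show ?thesis by (rule that[of G1 G2 H1 H2]) (use G H in auto)
qed

lemma pdy:
  assumes "(case_prod g has_derivative blinfun_apply D) (at (x, y))"
  shows "(g x has_derivative (\<lambda>v. blinfun_apply D (0, v))) (at y)"
  using partial_y[OF assms] by simp

lemma part1:
  fixes g :: "'a::euclidean_space \<Rightarrow> 'b::euclidean_space \<Rightarrow> real"
  assumes A1: "A1 f g h k" and A2: "A2 h k X" and A3: "A3 g h k X" and xX: "x \<in> X"
    and SC: "SC g h k X" and scsc: "SCSC_point g h k x"
  shows "grad_ystar_exists g h k X x"
proof -
  obtain G1 G2 H1 H2 where dG1: "\<And>z. (case_prod g has_derivative blinfun_apply (G1 z)) (at z)"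
    and dG2: "\<And>z. (G1 has_derivative blinfun_apply (G2 z)) (at z)"
    and cG2: "continuous_on UNIV G2"
    and dH1: "\<And>i z. i < k \<Longrightarrow> (case_prod (h i) has_derivative blinfun_apply (H1 i z)) (at z)"
    and dH2: "\<And>i z. i < k \<Longrightarrow> (H1 i has_derivative blinfun_apply (H2 i z)) (at z)"
    and cH2: "\<And>i. i < k \<Longrightarrow> continuous_on UNIV (H2 i)"
    using A1_decomp[OF A1] by metis
  obtain \<mu> where mu: "\<forall>x\<in>X. strongly_convex \<mu> (g x) \<and> (\<forall>i<k. convex_on UNIV (h i x))"
    using SC unfolding SC_def by blast
  have mupos: "\<mu> > 0" using mu xX unfolding strongly_convex_def by blast
  have dgx: "(g x' has_derivative (\<lambda>v. G1 (x', y) (0, v))) (at y)" for x' y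
    by (rule pdy[OF dG1])
  have dhx: "(h i x' has_derivative (\<lambda>v. H1 i (x', y) (0, v))) (at y)" if "i < k" for i x' y
    by (rule pdy[OF dH1[OF that]])
  have chx: "continuous_on UNIV (h i x')" if "i < k" for i x'
    by (rule has_derivative_continuous_on) (use dhx[OF that] in blast)
  have cgx: "continuous_on UNIV (g x')" for x'
    by (rule has_derivative_continuous_on) (use dgx in blast)
  have Yeq: "Yset h k x' = {y. \<forall>i<k. h i x' y \<le> 0}" for x' unfolding Yset_def by simp
  have fdg: "frechet_derivative (g x') (at y) = (\<lambda>v. G1 (x', y) (0, v))" for x' y
    using frechet_derivative_at[OF dgx] by simp
  have fdh: "frechet_derivative (h i x') (at y) = (\<lambda>v. H1 i (x', y) (0, v))" if "i < k" for i x' y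
    using frechet_derivative_at[OF dhx[OF that]] by simp
  obtain y1 where y1: "\<forall>i<k. h i x y1 < 0" using A2 xX unfolding A2_def by blast
  have scx: "strongly_convex \<mu> (g x)" and chc: "\<And>i. i < k \<Longrightarrow> convex_on UNIV (h i x)" using mu xX by auto
  have "closed (Yset h k x)" unfolding Yeq by (rule Yset_closed[OF chx])
  moreover have "y1 \<in> Yset h k x" using y1 unfolding Yeq by (auto intro: less_imp_le)
  ultimately obtain y0 where y0: "y0 \<in> Yset h k x" "\<forall>y'\<in>Yset h k x. g x y0 \<le> g x y'"
    using sc_min_exists[OF scx dgx cgx] by blast
  have y0s: "y0 \<in> ystar g h k x" unfolding ystar_def using y0 by blast
  have licq0: "LICQ h k x y0" using A3 xX y0s unfolding A3_def by blast
  define A where "A = {i. i < k \<and> h i x y0 = 0}"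
  have Ak: "A \<subseteq> {..<k}" unfolding A_def by auto
  have feas0: "\<forall>i<k. h i x y0 \<le> 0" using y0(1) unfolding Yeq by simp
  have act: "\<And>i. i \<in> A \<Longrightarrow> h i x y0 = 0" unfolding A_def by auto
  have inact: "\<And>i. i < k \<Longrightarrow> i \<notin> A \<Longrightarrow> h i x y0 < 0" using feas0 unfolding A_def by force
  have licqA: "\<forall>c. (\<forall>v. (\<Sum>i\<in>A. c i * H1 i (x, y0) (0, v)) = 0) \<longrightarrow> (\<forall>i\<in>A. c i = 0)"
  proof (intro allI impI)
    fix c assume c: "\<forall>v. (\<Sum>i\<in>A. c i * H1 i (x, y0) (0, v)) = 0"
    have "\<forall>v. (\<Sum>i\<in>{i. i < k \<and> h i x y0 = 0}. c i * frechet_derivative (h i x) (at y0) v) = 0"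
    proof
      fix v
      have "(\<Sum>i\<in>{i. i < k \<and> h i x y0 = 0}. c i * frechet_derivative (h i x) (at y0) v)
          = (\<Sum>i\<in>A. c i * H1 i (x, y0) (0, v))"
        unfolding A_def by (rule sum.cong) (auto simp: fdh)
      then show "(\<Sum>i\<in>{i. i < k \<and> h i x y0 = 0}. c i * frechet_derivative (h i x) (at y0) v) = 0"
        using c by simp
    qed
    then show "\<forall>i\<in>A. c i = 0" using licq0 unfolding LICQ_def A_def by blast
  qed
  have opt0: "\<forall>y'. (\<forall>i<k. h i x y' \<le> 0) \<longrightarrow> g x y0 \<le> g x y'" using y0(2) unfolding Yeq by blast
  have licqk: "\<forall>c. (\<forall>v. (\<Sum>i\<in>{i. i<k \<and> h i x y0 = 0}. c i * H1 i (x, y0) (0, v)) = 0) \<longrightarrow>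
      (\<forall>i. i<k \<and> h i x y0 = 0 \<longrightarrow> c i = 0)"
    using licqA unfolding A_def by blast
  obtain lam where lam: "\<forall>i\<ge>k. lam i = 0" "\<forall>i<k. lam i \<ge> 0 \<and> lam i * h i x y0 = 0"
    "\<forall>v. G1 (x, y0) (0, v) + (\<Sum>i<k. lam i * H1 i (x, y0) (0, v)) = 0"
    using kkt_exists[of k "\<lambda>i. h i x" y0 "g x" "\<lambda>v. G1 (x, y0) (0, v)" "\<lambda>i v. H1 i (x, y0) (0, v)" y1,
        OF feas0 opt0 dgx _ _ y1 licqk] dhx chc by blast
  have "KKT_mult g h k x y0 lam"
    unfolding KKT_mult_def
  proof (intro conjI)
    show "\<forall>i\<ge>k. lam i = 0" "\<forall>i<k. 0 \<le> lam i \<and> lam i * h i x y0 = 0" using lam by auto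
    show "\<forall>v. frechet_derivative (g x) (at y0) v + (\<Sum>i<k. lam i * frechet_derivative (h i x) (at y0) v) = 0"
    proof
      fix v
      have "(\<Sum>i<k. lam i * frechet_derivative (h i x) (at y0) v) = (\<Sum>i<k. lam i * H1 i (x, y0) (0, v))"
        by (rule sum.cong) (auto simp: fdh)
      then show "frechet_derivative (g x) (at y0) v + (\<Sum>i<k. lam i * frechet_derivative (h i x) (at y0) v) = 0"
        using lam(3) by (simp add: fdg)
    qed
  qed
  then have K0: "KKT_mult g h k x y0 (kkt_lambda g h k x y0)" by (rule kkt_lambda_KKT[OF licq0])
  define lam0 where "lam0 = kkt_lambda g h k x y0"
  have pos: "\<And>i. i \<in> A \<Longrightarrow> lam0 i > 0"
    using scsc y0s unfolding SCSC_point_def lam0_def A_def by blast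
  have lam0nn: "\<forall>i<k. lam0 i \<ge> 0 \<and> lam0 i * h i x y0 = 0" using K0 unfolding KKT_mult_def lam0_def by blast
  have kkt: "\<And>v. G1 (x, y0) (0, v) + (\<Sum>i\<in>A. lam0 i * H1 i (x, y0) (0, v)) = 0"
  proof -
    fix v
    have e: "frechet_derivative (g x) (at y0) v + (\<Sum>i<k. lam0 i * frechet_derivative (h i x) (at y0) v) = 0"
      using K0 unfolding KKT_mult_def lam0_def by blast
    have "(\<Sum>i<k. lam0 i * frechet_derivative (h i x) (at y0) v) = (\<Sum>i<k. if h i x y0 = 0 then lam0 i * H1 i (x, y0) (0, v) else 0)"
    proof (rule sum.cong)
      fix i assume "i \<in> {..<k}"
      then have ik: "i < k" by simp
      show "lam0 i * frechet_derivative (h i x) (at y0) v = (if h i x y0 = 0 then lam0 i * H1 i (x, y0) (0, v) else 0)"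
        using lam0nn ik by (auto simp: fdh[OF ik])
    qed simp
    also have "\<dots> = (\<Sum>i\<in>{i\<in>{..<k}. h i x y0 = 0}. lam0 i * H1 i (x, y0) (0, v))"
      by (rule sum.inter_filter[symmetric]) simp
    also have "{i\<in>{..<k}. h i x y0 = 0} = A" unfolding A_def by auto
    finally show "G1 (x, y0) (0, v) + (\<Sum>i\<in>A. lam0 i * H1 i (x, y0) (0, v)) = 0" using e by (simp add: fdg)
  qed
  have qc: "dy = 0" if h1: "\<forall>i\<in>A. H1 i (x, y0) (0, dy) = 0"
    and Q: "G2 (x, y0) (0, dy) (0, dy) + (\<Sum>i\<in>A. lam0 i * H2 i (x, y0) (0, dy) (0, dy)) = 0" for dy
  proof -
    have hh: "H2 i (x, y0) (0, dy) (0, dy) \<ge> 0" if i: "i \<in> A" for i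
    proof -
      have ik: "i < k" using i Ak by auto
      show ?thesis
        by (rule convex_hess[OF chc[OF ik] dhx[OF ik] hess_dir[of "H1 i" "H2 i" x y0 dy, OF dH2[OF ik]]])
    qed
    have dphi: "((\<lambda>y. g x y - \<mu> / 2 * (y \<bullet> y)) has_derivative (\<lambda>v. G1 (x, y) (0, v) - \<mu> / 2 * (y \<bullet> v + v \<bullet> y))) (at y)" for y
      using dgx[of x y] by (auto intro!: derivative_eq_intros)
    have dq: "((\<lambda>t. G1 (x, y0 + t *\<^sub>R dy) (0, dy) - \<mu> / 2 * ((y0 + t *\<^sub>R dy) \<bullet> dy + dy \<bullet> (y0 + t *\<^sub>R dy)))
        has_real_derivative (G2 (x, y0) (0, dy) (0, dy) - \<mu> / 2 * (dy \<bullet> dy + dy \<bullet> dy))) (at 0)"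
    proof -
      have eqf: "(\<lambda>t. G1 (x, y0 + t *\<^sub>R dy) (0, dy) - \<mu> / 2 * ((y0 + t *\<^sub>R dy) \<bullet> dy + dy \<bullet> (y0 + t *\<^sub>R dy)))
          = (\<lambda>t. G1 (x, y0 + t *\<^sub>R dy) (0, dy) - \<mu> / 2 * (2 * (y0 \<bullet> dy) + t * (2 * (dy \<bullet> dy))))"
        by (auto simp: inner_add_left inner_add_right inner_commute algebra_simps)
      have "((\<lambda>t. G1 (x, y0 + t *\<^sub>R dy) (0, dy) - \<mu> / 2 * (2 * (y0 \<bullet> dy) + t * (2 * (dy \<bullet> dy))))
        has_real_derivative (G2 (x, y0) (0, dy) (0, dy) - \<mu> / 2 * (0 + 1 * (2 * (dy \<bullet> dy))))) (at 0)"
        using hess_dir[of G1 G2 x y0 dy, OF dG2]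
        by (intro DERIV_diff DERIV_cmult DERIV_add DERIV_const DERIV_cmult_right DERIV_ident) auto
      then show ?thesis unfolding eqf by simp
    qed
    have hg: "G2 (x, y0) (0, dy) (0, dy) - \<mu> / 2 * (dy \<bullet> dy + dy \<bullet> dy) \<ge> 0"
      by (rule convex_hess[OF strongly_convex_shift[OF scx] dphi dq])
    have "(\<Sum>i\<in>A. lam0 i * H2 i (x, y0) (0, dy) (0, dy)) \<ge> 0"
      by (rule sum_nonneg) (use hh pos in \<open>auto intro: mult_nonneg_nonneg less_imp_le\<close>)
    then have "\<mu> * (dy \<bullet> dy) \<le> 0" using hg Q by simp
    then have "dy \<bullet> dy \<le> 0" using mupos by (simp add: mult_le_0_iff)
    then show "dy = 0" by (metis inner_eq_zero_iff inner_ge_zero order_antisym)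
  qed
  obtain e Y \<Lambda> where e: "e > 0" "Y differentiable (at x)"
    "\<forall>x'\<in>ball x e. (\<forall>i\<in>A. h i x' (Y x') = 0 \<and> \<Lambda> x' i > 0) \<and> (\<forall>i. i < k \<and> i \<notin> A \<longrightarrow> h i x' (Y x') < 0) \<and>
     (\<forall>v. G1 (x', Y x') (0, v) + (\<Sum>i\<in>A. \<Lambda> x' i * H1 i (x', Y x') (0, v)) = 0) \<and>
     (\<forall>y'. (\<forall>s\<in>{0..1}. (\<forall>v. G1 (x', Y x' + s *\<^sub>R (y' - Y x')) (0, v) +
              (\<Sum>i\<in>A. \<Lambda> x' i * H1 i (x', Y x' + s *\<^sub>R (y' - Y x')) (0, v)) = 0)
          \<and> (\<forall>i\<in>A. h i x' (Y x' + s *\<^sub>R (y' - Y x')) = 0)) \<longrightarrow> y' = Y x')"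
    using local_kkt[of g G1 G2 k h H1 H2 A x y0 lam0, OF dG1 dG2 cG2 dH1 dH2 cH2 Ak act inact pos kkt licqA qc]
    by blast
  have ys: "ystar g h k x' = {Y x'}" if x': "x' \<in> X \<inter> ball x e" for x'
  proof -
    have x'X: "x' \<in> X" and x'b: "x' \<in> ball x e" using x' by auto
    have scx': "strongly_convex \<mu> (g x')" and chc': "\<And>i. i < k \<Longrightarrow> convex_on UNIV (h i x')"
      using mu x'X by auto
    note P = e(3)[rule_format, OF x'b]
    have feas: "\<forall>i<k. h i x' (Y x') \<le> 0"
    proof (intro allI impI)
      fix i assume "i < k" then show "h i x' (Y x') \<le> 0" using P by (cases "i \<in> A") (auto intro: less_imp_le)
    qed
    have opt: "g x' (Y x') \<le> g x' y'" if y': "\<forall>i<k. h i x' y' \<le> 0" for y'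
    proof (rule kkt_suff[of "g x'" "\<lambda>v. G1 (x', Y x') (0, v)" "Y x'" k "\<lambda>i. h i x'" A
          "\<lambda>i v. H1 i (x', Y x') (0, v)" "\<lambda>i. \<Lambda> x' i"])
      show "convex_on UNIV (g x')" by (rule strongly_convex_convex[OF scx'])
      show "(g x' has_derivative (\<lambda>v. G1 (x', Y x') (0, v))) (at (Y x'))" by (rule dgx)
      show "\<And>i. i < k \<Longrightarrow> convex_on UNIV (h i x')" by (rule chc')
      show "\<And>i. i \<in> A \<Longrightarrow> (h i x' has_derivative (\<lambda>v. H1 i (x', Y x') (0, v))) (at (Y x'))"
        using dhx Ak by auto
    qed (use P y' Ak in \<open>auto intro: less_imp_le\<close>)
    have Ymem: "Y x' \<in> ystar g h k x'" unfolding ystar_def Yeq using feas opt by auto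
    show ?thesis
    proof (intro equalityI subsetI)
      fix y assume y: "y \<in> ystar g h k x'"
      have "convex (Yset h k x')" unfolding Yeq by (rule Yset_convex[OF chc'])
      then show "y \<in> {Y x'}" using sc_unique[OF scx' _ _ _ _] y Ymem unfolding ystar_def by blast
    next
      fix y assume "y \<in> {Y x'}" then show "y \<in> ystar g h k x'" using Ymem by simp
    qed
  qed
  show ?thesis unfolding grad_ystar_exists_def
    using e(1) ys differentiable_at_withinI[OF e(2)] by blast
qed


lemma affine_deriv:
  fixes \<phi> :: "'b::euclidean_space \<Rightarrow> real"
  assumes "affine_fun \<phi>"
  obtains l c where "linear l" "\<And>y. \<phi> y = l y + c" "\<And>y. (\<phi> has_derivative l) (at y)" "convex_on UNIV \<phi>"
proof -
  obtain l c where l: "linear l" "\<forall>y. \<phi> y = l y + c" using assms unfolding affine_fun_def by blast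
  have e: "\<phi> = (\<lambda>y. l y + c)" using l(2) by auto
  have bl: "bounded_linear l" using l(1) linear_conv_bounded_linear by blast
  have d: "(\<phi> has_derivative l) (at y)" for y
    unfolding e by (rule has_derivative_add_const[OF bounded_linear_imp_has_derivative[OF bl]])
  have c: "convex_on UNIV \<phi>"
  proof (rule convex_onI)
    fix t :: real and x y :: 'b
    have "l ((1 - t) *\<^sub>R x + t *\<^sub>R y) = (1 - t) * l x + t * l y"
      by (simp add: linear_add[OF l(1)] linear_cmul[OF l(1)])
    then show "\<phi> ((1 - t) *\<^sub>R x + t *\<^sub>R y) \<le> (1 - t) * \<phi> x + t * \<phi> y"
      unfolding e by (simp add: algebra_simps)
  qed simp
  show ?thesis by (rule that[OF l(1) _ d c]) (use l(2) in auto)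
qed

lemma lin_face:
  fixes \<phi> :: "'b::real_vector \<Rightarrow> real" and hh :: "nat \<Rightarrow> 'b \<Rightarrow> real"
  assumes L: "\<phi> y = \<phi> z + L (y - z)"
    and LH: "\<And>i. i \<in> A \<Longrightarrow> hh i y = hh i z + LH i (y - z)"
    and fin: "finite A"
    and lam: "\<forall>i\<in>A. lam i \<ge> 0 \<and> lam i * hh i z = 0"
    and kk: "\<forall>v. L v + (\<Sum>i\<in>A. lam i * LH i v) = 0"
    and y: "\<forall>i\<in>A. hh i y \<le> 0" and le: "\<phi> y \<le> \<phi> z"
  shows "\<forall>i\<in>A. lam i > 0 \<longrightarrow> LH i (y - z) = 0"
proof -
  have "\<phi> y - \<phi> z = L (y - z)" using L by simp
  also have "\<dots> = - (\<Sum>i\<in>A. lam i * LH i (y - z))"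
  proof -
    have "L (y - z) + (\<Sum>i\<in>A. lam i * LH i (y - z)) = 0" using kk by blast
    then show ?thesis by linarith
  qed
  also have "(\<Sum>i\<in>A. lam i * LH i (y - z)) = (\<Sum>i\<in>A. lam i * hh i y)"
  proof (rule sum.cong)
    fix i assume i: "i \<in> A"
    have "LH i (y - z) = hh i y - hh i z" using LH[OF i] by simp
    then show "lam i * LH i (y - z) = lam i * hh i y" using lam i by (simp add: right_diff_distrib)
  qed simp
  finally have s: "(\<Sum>i\<in>A. - (lam i * hh i y)) \<le> 0" using le by (simp add: sum_negf)
  have nn: "\<And>i. i \<in> A \<Longrightarrow> 0 \<le> - (lam i * hh i y)"
    using lam y by (simp add: mult_nonneg_nonpos)
  have "0 \<le> (\<Sum>i\<in>A. - (lam i * hh i y))" by (rule sum_nonneg) (use nn in auto)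
  then have "(\<Sum>i\<in>A. - (lam i * hh i y)) = 0" using s by linarith
  then have z: "\<forall>i\<in>A. lam i * hh i y = 0" using sum_nonneg_eq_0_iff[OF fin nn] by simp
  show ?thesis
  proof (intro ballI impI)
    fix i assume i: "i \<in> A" and p: "lam i > 0"
    have "hh i y = 0" "hh i z = 0" using z lam i p by auto
    then show "LH i (y - z) = 0" using LH[OF i] by simp
  qed
qed

lemma kkt_at:
  fixes g :: "'a::euclidean_space \<Rightarrow> 'b::euclidean_space \<Rightarrow> real"
  assumes dgx: "\<And>y. (g x has_derivative (\<lambda>v. blinfun_apply (G1 (x, y)) (0, v))) (at y)"
    and dhx: "\<And>i y. i < k \<Longrightarrow> (h i x has_derivative (\<lambda>v. blinfun_apply (H1 i (x, y)) (0, v))) (at y)"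
    and chc: "\<And>i. i < k \<Longrightarrow> convex_on UNIV (h i x)"
    and y1: "\<forall>i<k. h i x y1 < 0"
    and licq0: "LICQ h k x y0" and y0s: "y0 \<in> ystar g h k x"
  shows "KKT_mult g h k x y0 (kkt_lambda g h k x y0)"
    and "\<forall>v. G1 (x, y0) (0, v) + (\<Sum>i<k. kkt_lambda g h k x y0 i * H1 i (x, y0) (0, v)) = 0"
proof -
  have Yeq: "Yset h k x = {y. \<forall>i<k. h i x y \<le> 0}" unfolding Yset_def by simp
  have fdg: "frechet_derivative (g x) (at y) = (\<lambda>v. G1 (x, y) (0, v))" for y
    using frechet_derivative_at[OF dgx] by simp
  have fdh: "frechet_derivative (h i x) (at y) = (\<lambda>v. H1 i (x, y) (0, v))" if "i < k" for i y
    using frechet_derivative_at[OF dhx[OF that]] by simp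
  have feas0: "\<forall>i<k. h i x y0 \<le> 0" using y0s unfolding ystar_def Yeq by simp
  have opt0: "\<forall>y'. (\<forall>i<k. h i x y' \<le> 0) \<longrightarrow> g x y0 \<le> g x y'" using y0s unfolding ystar_def Yeq by blast
  have licqk: "\<forall>c. (\<forall>v. (\<Sum>i\<in>{i. i<k \<and> h i x y0 = 0}. c i * H1 i (x, y0) (0, v)) = 0) \<longrightarrow>
      (\<forall>i. i<k \<and> h i x y0 = 0 \<longrightarrow> c i = 0)"
  proof (rule allI, rule impI)
    fix c assume c: "\<forall>v. (\<Sum>i\<in>{i. i<k \<and> h i x y0 = 0}. c i * H1 i (x, y0) (0, v)) = 0"
    have "\<forall>v. (\<Sum>i\<in>{i. i < k \<and> h i x y0 = 0}. c i * frechet_derivative (h i x) (at y0) v) = 0"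
    proof
      fix v
      have "(\<Sum>i\<in>{i. i < k \<and> h i x y0 = 0}. c i * frechet_derivative (h i x) (at y0) v)
          = (\<Sum>i\<in>{i. i<k \<and> h i x y0 = 0}. c i * H1 i (x, y0) (0, v))"
        by (rule sum.cong) (auto simp: fdh)
      then show "(\<Sum>i\<in>{i. i < k \<and> h i x y0 = 0}. c i * frechet_derivative (h i x) (at y0) v) = 0"
        using c by simp
    qed
    then show "\<forall>i. i<k \<and> h i x y0 = 0 \<longrightarrow> c i = 0" using licq0 unfolding LICQ_def by blast
  qed
  obtain lam where lam: "\<forall>i\<ge>k. lam i = 0" "\<forall>i<k. lam i \<ge> 0 \<and> lam i * h i x y0 = 0"
    "\<forall>v. G1 (x, y0) (0, v) + (\<Sum>i<k. lam i * H1 i (x, y0) (0, v)) = 0"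
    using kkt_exists[of k "\<lambda>i. h i x" y0 "g x" "\<lambda>v. G1 (x, y0) (0, v)" "\<lambda>i v. H1 i (x, y0) (0, v)" y1,
        OF feas0 opt0 dgx _ _ y1 licqk] dhx chc by blast
  have "KKT_mult g h k x y0 lam"
    unfolding KKT_mult_def
  proof (intro conjI)
    show "\<forall>i\<ge>k. lam i = 0" "\<forall>i<k. 0 \<le> lam i \<and> lam i * h i x y0 = 0" using lam by auto
    show "\<forall>v. frechet_derivative (g x) (at y0) v + (\<Sum>i<k. lam i * frechet_derivative (h i x) (at y0) v) = 0"
    proof
      fix v
      have "(\<Sum>i<k. lam i * frechet_derivative (h i x) (at y0) v) = (\<Sum>i<k. lam i * H1 i (x, y0) (0, v))"
        by (rule sum.cong) (auto simp: fdh)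
      then show "frechet_derivative (g x) (at y0) v + (\<Sum>i<k. lam i * frechet_derivative (h i x) (at y0) v) = 0"
        using lam(3) by (simp add: fdg)
    qed
  qed
  then show K0: "KKT_mult g h k x y0 (kkt_lambda g h k x y0)" by (rule kkt_lambda_KKT[OF licq0])
  show "\<forall>v. G1 (x, y0) (0, v) + (\<Sum>i<k. kkt_lambda g h k x y0 i * H1 i (x, y0) (0, v)) = 0"
  proof
    fix v
    have e: "frechet_derivative (g x) (at y0) v + (\<Sum>i<k. kkt_lambda g h k x y0 i * frechet_derivative (h i x) (at y0) v) = 0"
      using K0 unfolding KKT_mult_def by blast
    have "(\<Sum>i<k. kkt_lambda g h k x y0 i * frechet_derivative (h i x) (at y0) v) = (\<Sum>i<k. kkt_lambda g h k x y0 i * H1 i (x, y0) (0, v))"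
      by (rule sum.cong) (auto simp: fdh)
    then show "G1 (x, y0) (0, v) + (\<Sum>i<k. kkt_lambda g h k x y0 i * H1 i (x, y0) (0, v)) = 0"
      using e by (simp add: fdg)
  qed
qed

lemma part2:
  fixes g :: "'a::euclidean_space \<Rightarrow> 'b::euclidean_space \<Rightarrow> real"
  assumes A1: "A1 f g h k" and A2: "A2 h k X" and A3: "A3 g h k X" and xX: "x \<in> X"
    and LIN: "LIN g h k X"
  shows "(SCSC_point g h k x \<longleftrightarrow> (\<exists>y. ystar g h k x = {y})) \<and>
         ((\<exists>y. ystar g h k x = {y}) \<longleftrightarrow> grad_ystar_exists g h k X x)"
proof -
  obtain G1 G2 H1 H2 where dG1: "\<And>z. (case_prod g has_derivative blinfun_apply (G1 z)) (at z)"
    and dG2: "\<And>z. (G1 has_derivative blinfun_apply (G2 z)) (at z)"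
    and cG2: "continuous_on UNIV G2"
    and dH1: "\<And>i z. i < k \<Longrightarrow> (case_prod (h i) has_derivative blinfun_apply (H1 i z)) (at z)"
    and dH2: "\<And>i z. i < k \<Longrightarrow> (H1 i has_derivative blinfun_apply (H2 i z)) (at z)"
    and cH2: "\<And>i. i < k \<Longrightarrow> continuous_on UNIV (H2 i)"
    using A1_decomp[OF A1] by metis
  have dgx: "(g x' has_derivative (\<lambda>v. G1 (x', y) (0, v))) (at y)" for x' y
    by (rule pdy[OF dG1])
  have dhx: "(h i x' has_derivative (\<lambda>v. H1 i (x', y) (0, v))) (at y)" if "i < k" for i x' y
    by (rule pdy[OF dH1[OF that]])
  have Yeq: "Yset h k x' = {y. \<forall>i<k. h i x' y \<le> 0}" for x' unfolding Yset_def by simp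
  have linG: "linear (\<lambda>v. G1 z (0, v))" for z by (rule linear_Dy)
  have linH: "linear (\<lambda>v. H1 i z (0, v))" for i z by (rule linear_Dy)
  have affg: "g x' y' = g x' y + G1 (x', y) (0, y' - y) \<and> convex_on UNIV (g x') \<and>
      (\<forall>v. G1 (x', y) (0, v) = G1 (x', y') (0, v))" if x': "x' \<in> X" for x' y y'
  proof -
    have "affine_fun (g x')" using LIN x' unfolding LIN_def by blast
    then obtain l c where l: "linear l" "\<And>y. g x' y = l y + c" "\<And>y. (g x' has_derivative l) (at y)"
      "convex_on UNIV (g x')" by (rule affine_deriv) blast
    have e: "(\<lambda>v. G1 (x', y) (0, v)) = l" for y by (rule has_derivative_unique[OF dgx l(3)])
    show ?thesis using l e[of y] e[of y'] by (auto simp: linear_diff fun_eq_iff)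
  qed
  have affh: "h i x' y' = h i x' y + H1 i (x', y) (0, y' - y) \<and> convex_on UNIV (h i x') \<and>
      (\<forall>v. H1 i (x', y) (0, v) = H1 i (x', y') (0, v))" if x': "x' \<in> X" and i: "i < k" for i x' y y'
  proof -
    have "affine_fun (h i x')" using LIN x' i unfolding LIN_def by blast
    then obtain l c where l: "linear l" "\<And>y. h i x' y = l y + c" "\<And>y. (h i x' has_derivative l) (at y)"
      "convex_on UNIV (h i x')" by (rule affine_deriv) blast
    have e: "(\<lambda>v. H1 i (x', y) (0, v)) = l" for y by (rule has_derivative_unique[OF dhx[OF i] l(3)])
    show ?thesis using l e[of y] e[of y'] by (auto simp: linear_diff fun_eq_iff)
  qed
  have chc: "\<And>i. i < k \<Longrightarrow> convex_on UNIV (h i x)" using affh xX by blast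
  obtain y1 where y1: "\<forall>i<k. h i x y1 < 0" using A2 xX unfolding A2_def by blast
  have cgx: "continuous_on UNIV (g x')" for x'
    by (rule has_derivative_continuous_on) (use dgx in blast)
  have Ksol: "KKT_mult g h k x y (kkt_lambda g h k x y) \<and>
      (\<forall>v. G1 (x, y) (0, v) + (\<Sum>i<k. kkt_lambda g h k x y i * H1 i (x, y) (0, v)) = 0)"
    if "y \<in> ystar g h k x" for y
    using kkt_at[of g x G1 k h H1 y1 y, OF dgx dhx chc y1 _ that] A3 xX that unfolding A3_def by blast
  have cpt: "compact (Yset h k x)" using LIN xX unfolding LIN_def by blast
  have y1Y: "y1 \<in> Yset h k x" using y1 unfolding Yeq by (auto intro: less_imp_le)
  obtain y0 where y0: "y0 \<in> Yset h k x" "\<forall>y'\<in>Yset h k x. g x y0 \<le> g x y'"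
    using continuous_attains_inf[OF cpt _ continuous_on_subset[OF cgx]] y1Y by blast
  have y0s: "y0 \<in> ystar g h k x" unfolding ystar_def using y0 by blast
  have pert: "\<exists>t>0. y + t *\<^sub>R u \<in> ystar g h k x"
    if ys: "y \<in> ystar g h k x" and ua: "\<forall>i<k. h i x y = 0 \<longrightarrow> H1 i (x, y) (0, u) \<le> 0"
      and ug: "G1 (x, y) (0, u) \<le> 0" for y u
  proof -
    have feas: "\<forall>i<k. h i x y \<le> 0" and opt: "\<forall>y'\<in>Yset h k x. g x y \<le> g x y'"
      using ys unfolding ystar_def Yeq by auto
    have ev: "eventually (\<lambda>t. \<forall>j\<in>{j. j < k \<and> h j x y \<noteq> 0}. h j x y + t * H1 j (x, y) (0, u) < 0) (at_right 0)"
    proof (rule eventually_ball_finite, simp, rule ballI)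
      fix j assume j: "j \<in> {j. j < k \<and> h j x y \<noteq> 0}"
      have neg: "h j x y < 0" using j feas by force
      have "((\<lambda>t. h j x y + t * H1 j (x, y) (0, u)) \<longlongrightarrow> h j x y + 0 * H1 j (x, y) (0, u)) (at_right 0)"
        by (intro tendsto_intros)
      then show "eventually (\<lambda>t. h j x y + t * H1 j (x, y) (0, u) < 0) (at_right 0)"
        using order_tendstoD(2) neg by fastforce
    qed
    obtain t where t: "t > 0" "\<forall>j\<in>{j. j < k \<and> h j x y \<noteq> 0}. h j x y + t * H1 j (x, y) (0, u) < 0"
      using eventually_happens'[OF trivial_limit_at_right_real eventually_conj[OF eventually_at_right_less ev]]
      by blast
    have hlin: "h j x (y + t *\<^sub>R u) = h j x y + t * H1 j (x, y) (0, u)" if "j < k" for j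
      using affh[OF xX that, where y=y and y'="y + t *\<^sub>R u"] linear_cmul[OF linH[of j "(x, y)"]] by simp
    have glin: "g x (y + t *\<^sub>R u) = g x y + t * G1 (x, y) (0, u)"
      using affg[OF xX, where y=y and y'="y + t *\<^sub>R u"] linear_cmul[OF linG[of "(x, y)"]] by simp
    have f2: "\<forall>j<k. h j x (y + t *\<^sub>R u) \<le> 0"
    proof (intro allI impI)
      fix j assume j: "j < k"
      show "h j x (y + t *\<^sub>R u) \<le> 0"
      proof (cases "h j x y = 0")
        case True
        then show ?thesis using hlin[OF j] ua j t(1) by (simp add: mult_nonneg_nonpos)
      next
        case False
        then show ?thesis using hlin[OF j] t(2) j by force
      qed
    qed
    have "g x (y + t *\<^sub>R u) \<le> g x y" using glin ug t(1) by (simp add: mult_nonneg_nonpos)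
    then have "y + t *\<^sub>R u \<in> ystar g h k x" using f2 opt unfolding ystar_def Yeq by force
    then show ?thesis using t(1) by blast
  qed
  have ba: "SCSC_point g h k x" if sing: "ystar g h k x = {ys}" for ys
    unfolding SCSC_point_def
  proof (intro ballI allI impI)
    fix y i assume y: "y \<in> ystar g h k x" and ik: "i < k" and act: "h i x y = 0"
    have yys: "y = ys" using y sing by auto
    define lam where "lam = kkt_lambda g h k x y"
    have K: "KKT_mult g h k x y lam" and KK: "\<forall>v. G1 (x, y) (0, v) + (\<Sum>i<k. lam i * H1 i (x, y) (0, v)) = 0"
      using Ksol[OF y] unfolding lam_def by auto
    have lnn: "\<forall>j<k. lam j \<ge> 0 \<and> lam j * h j x y = 0" using K unfolding KKT_mult_def by blast
    show "kkt_lambda g h k x y i > 0"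
    proof (rule ccontr)
      assume "\<not> kkt_lambda g h k x y i > 0"
      then have l0: "lam i = 0" using lnn ik unfolding lam_def by force
      define A where "A = {j. j < k \<and> h j x y = 0}"
      have finA: "finite A" unfolding A_def by auto
      have iA: "i \<in> A" unfolding A_def using ik act by auto
      define a where "a j = gradY (H1 j (x, y))" for j
      have licq: "LICQ h k x y" using A3 xX y unfolding A3_def by blast
      have ind: "\<forall>c. (\<Sum>j\<in>A. c j *\<^sub>R a j) = 0 \<longrightarrow> (\<forall>j\<in>A. c j = 0)"
      proof (rule allI, rule impI)
        fix c assume c: "(\<Sum>j\<in>A. c j *\<^sub>R a j) = 0"
        have "\<forall>v. (\<Sum>j\<in>{i. i < k \<and> h i x y = 0}. c j * frechet_derivative (h j x) (at y) v) = 0"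
        proof
          fix v
          have "(\<Sum>j\<in>{i. i < k \<and> h i x y = 0}. c j * frechet_derivative (h j x) (at y) v)
              = (\<Sum>j\<in>A. c j *\<^sub>R a j) \<bullet> v"
            unfolding inner_sum_left A_def
            by (rule sum.cong) (auto simp: a_def gradY_inner frechet_derivative_at[OF dhx, symmetric])
          then show "(\<Sum>j\<in>{i. i < k \<and> h i x y = 0}. c j * frechet_derivative (h j x) (at y) v) = 0"
            using c by simp
        qed
        then show "\<forall>j\<in>A. c j = 0" using licq unfolding LICQ_def A_def by blast
      qed
      obtain d where d: "a i \<bullet> d = 1" "\<forall>j\<in>A-{i}. a j \<bullet> d = 0"
        using dual_vector[OF finA iA ind] by blast
      have ua: "\<forall>j<k. h j x y = 0 \<longrightarrow> H1 j (x, y) (0, - d) \<le> 0"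
      proof (intro allI impI)
        fix j assume j: "j < k" "h j x y = 0"
        then have "j \<in> A" unfolding A_def by auto
        then have "H1 j (x, y) (0, d) \<ge> 0" using d by (cases "j = i") (auto simp: a_def gradY_inner)
        moreover have "H1 j (x, y) (0, - d) = - H1 j (x, y) (0, d)"
          using linear_neg[OF linH[of j "(x, y)"]] by simp
        ultimately show "H1 j (x, y) (0, - d) \<le> 0" by simp
      qed
      have sum0: "(\<Sum>j<k. lam j * H1 j (x, y) (0, d)) = 0"
      proof (rule sum.neutral, rule ballI)
        fix j assume "j \<in> {..<k}"
        then have j: "j < k" by simp
        show "lam j * H1 j (x, y) (0, d) = 0"
        proof (cases "j \<in> A")
          case True
          then show ?thesis using d l0 by (cases "j = i") (auto simp: a_def gradY_inner)
        next
          case False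
          then have "h j x y \<noteq> 0" using j unfolding A_def by auto
          then have "lam j = 0" using lnn j by auto
          then show ?thesis by simp
        qed
      qed
      have ug: "G1 (x, y) (0, - d) \<le> 0"
        using KK[rule_format, of d] sum0 linear_neg[OF linG[of "(x, y)"]] by simp
      obtain t where t: "t > 0" "y + t *\<^sub>R (- d) \<in> ystar g h k x" using pert[OF y ua ug] by blast
      then have "y + t *\<^sub>R (- d) = y" using sing yys by auto
      then have "d = 0" using t(1) by simp
      then show False using d(1) by simp
    qed
  qed
  have face: "\<forall>i<k. h i x z = 0 \<longrightarrow> H1 i (x, z) (0, y - z) = 0"
    if zs: "z \<in> ystar g h k x" and scz: "\<forall>i<k. h i x z = 0 \<longrightarrow> kkt_lambda g h k x z i > 0"
      and ys: "y \<in> ystar g h k x" for z y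
  proof -
    define lam where "lam = kkt_lambda g h k x z"
    have K: "KKT_mult g h k x z lam" and KK: "\<forall>v. G1 (x, z) (0, v) + (\<Sum>i<k. lam i * H1 i (x, z) (0, v)) = 0"
      using Ksol[OF zs] unfolding lam_def by auto
    have lnn: "\<forall>i\<in>{..<k}. lam i \<ge> 0 \<and> lam i * h i x z = 0" using K unfolding KKT_mult_def by auto
    have yf: "\<forall>i\<in>{..<k}. h i x y \<le> 0" using ys unfolding ystar_def Yeq by auto
    have zf: "z \<in> Yset h k x" using zs unfolding ystar_def by auto
    have le: "g x y \<le> g x z" using ys zf unfolding ystar_def by auto
    have r: "\<forall>i\<in>{..<k}. lam i > 0 \<longrightarrow> H1 i (x, z) (0, y - z) = 0"
    proof (rule lin_face[of "g x" y z "\<lambda>v. G1 (x, z) (0, v)" "{..<k}" "\<lambda>i. h i x" "\<lambda>i v. H1 i (x, z) (0, v)" lam])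
      show "g x y = g x z + G1 (x, z) (0, y - z)" using affg[OF xX, where y=z and y'=y] by simp
      show "\<And>i. i \<in> {..<k} \<Longrightarrow> h i x y = h i x z + H1 i (x, z) (0, y - z)"
        using affh[OF xX, where y=z and y'=y] by simp
    qed (use lnn KK yf le in auto)
    show ?thesis using r scz unfolding lam_def by auto
  qed
  have ab: "\<exists>y. ystar g h k x = {y}" if scsc: "SCSC_point g h k x"
  proof (intro exI[of _ y0] equalityI subsetI)
    fix y assume y: "y \<in> {y0}" then show "y \<in> ystar g h k x" using y0s by simp
  next
    fix y1' assume y1': "y1' \<in> ystar g h k x"
    have scz: "\<forall>i<k. h i x z = 0 \<longrightarrow> kkt_lambda g h k x z i > 0" if "z \<in> ystar g h k x" for z
      using scsc that unfolding SCSC_point_def by blast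
    show "y1' \<in> {y0}"
    proof (rule ccontr)
      assume "y1' \<notin> {y0}"
      then have dnz: "y1' - y0 \<noteq> 0" by simp
      define d where "d = y1' - y0"
      have "g x y1' = g x y0" using y1' y0s unfolding ystar_def by (auto intro: order_antisym)
      then have gd: "G1 (x, y0) (0, d) = 0" using affg[OF xX, where y=y0 and y'=y1'] unfolding d_def by simp
      define c where "c j = H1 j (x, y0) (0, d)" for j
      have hlin: "h j x (y0 + t *\<^sub>R d) = h j x y0 + t * c j" if "j < k" for j t
        using affh[OF xX that, where y=y0 and y'="y0 + t *\<^sub>R d"] linear_cmul[OF linH[of j "(x, y0)"]]
        unfolding c_def by simp
      have glin: "g x (y0 + t *\<^sub>R d) = g x y0" for t
        using affg[OF xX, where y=y0 and y'="y0 + t *\<^sub>R d"] linear_cmul[OF linG[of "(x, y0)"]] gd by simp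
      have f0: "\<forall>j<k. h j x y0 \<le> 0" using y0(1) unfolding Yeq by auto
      define J where "J = {j. j < k \<and> c j > 0}"
      have finJ: "finite J" unfolding J_def by auto
      show False
      proof (cases "J = {}")
        case True
        have inY: "y0 + t *\<^sub>R d \<in> Yset h k x" if t: "t \<ge> 0" for t
        proof -
          have "\<forall>j<k. h j x (y0 + t *\<^sub>R d) \<le> 0"
          proof (intro allI impI)
            fix j assume j: "j < k"
            have "c j \<le> 0" using True j unfolding J_def by force
            then have "t * c j \<le> 0" using t by (simp add: mult_nonneg_nonpos)
            then show "h j x (y0 + t *\<^sub>R d) \<le> 0" using hlin[OF j, of t] f0[rule_format, OF j] by simp
          qed
          then show ?thesis unfolding Yeq by simp
        qed
        obtain B where B: "\<forall>y\<in>Yset h k x. norm y \<le> B"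
          using compact_imp_bounded[OF cpt] unfolding bounded_iff by blast
        define t where "t = (B + norm y0 + 1) / norm d"
        have nd: "norm d > 0" using dnz unfolding d_def by simp
        have B0: "B \<ge> 0" using B y0(1) norm_ge_zero order_trans by blast
        have t0: "t \<ge> 0" unfolding t_def using nd B0 by simp
        have "norm (t *\<^sub>R d) = B + norm y0 + 1" unfolding t_def using nd B0 by simp
        moreover have "norm (t *\<^sub>R d) \<le> norm (y0 + t *\<^sub>R d) + norm y0"
          using norm_triangle_ineq4[of "y0 + t *\<^sub>R d" y0] by simp
        moreover have "norm (y0 + t *\<^sub>R d) \<le> B" using B inY[OF t0] by blast
        ultimately show False by simp
      next
        case False
        define r where "r j = - h j x y0 / c j" for j
        define T where "T = Min (r ` J)"
        have "T \<in> r ` J" unfolding T_def using Min_in[of "r ` J"] finJ False by blast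
        then obtain jm where jm: "jm \<in> J" "T = r jm" by blast
        have Tle: "T \<le> r j" if "j \<in> J" for j unfolding T_def using finJ that by simp
        have cjm: "c jm > 0" "jm < k" using jm(1) unfolding J_def by auto
        have T0: "T \<ge> 0" using jm cjm f0[rule_format, OF cjm(2)] unfolding r_def
          by (simp add: divide_nonpos_pos)
        define z where "z = y0 + T *\<^sub>R d"
        have zf: "\<forall>j<k. h j x z \<le> 0"
        proof (intro allI impI)
          fix j assume j: "j < k"
          show "h j x z \<le> 0"
          proof (cases "j \<in> J")
            case True
            then have cj: "c j > 0" unfolding J_def by auto
            have "T * c j \<le> r j * c j" using Tle[OF True] cj by (simp add: mult_right_mono)
            also have "r j * c j = - h j x y0" unfolding r_def using cj by simp
            finally show ?thesis using hlin[OF j, of T] unfolding z_def by simp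
          next
            case False
            then have "c j \<le> 0" using j unfolding J_def by auto
            then have "T * c j \<le> 0" using T0 by (simp add: mult_nonneg_nonpos)
            then show ?thesis using hlin[OF j, of T] f0[rule_format, OF j] unfolding z_def by simp
          qed
        qed
        have hjm: "h jm x z = 0" using hlin[OF cjm(2), of T] jm(2) cjm(1) unfolding z_def r_def by simp
        have zs: "z \<in> ystar g h k x"
          using zf glin[of T] y0(2) unfolding ystar_def Yeq z_def by auto
        have H1c: "H1 jm (x, z) (0, v) = c' v" if "c' = (\<lambda>v. H1 jm (x, y0) (0, v))" for v c'
          using affh[OF xX cjm(2), where y=z and y'=y0] that by simp
        have lm: "H1 jm (x, y0) (0, r *\<^sub>R d) = r * c jm" for r
          using linear_cmul[OF linH[of jm "(x, y0)"]] unfolding c_def by simp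
        have f1: "H1 jm (x, z) (0, y0 - z) = 0" using face[OF zs scz[OF zs] y0s] cjm(2) hjm by blast
        have "y0 - z = (- T) *\<^sub>R d" unfolding z_def by simp
        moreover have "H1 jm (x, y0) (0, y0 - z) = 0" using f1 H1c[OF refl] by simp
        ultimately have "H1 jm (x, y0) (0, (- T) *\<^sub>R d) = 0" by metis
        then have "(- T) * c jm = 0" using lm[of "- T"] by metis
        then have "T = 0" using cjm(1) by simp
        have f2: "H1 jm (x, z) (0, y1' - z) = 0" using face[OF zs scz[OF zs] y1'] cjm(2) hjm by blast
        have "y1' - z = (1 - T) *\<^sub>R d" unfolding z_def d_def by (simp add: algebra_simps)
        moreover have "H1 jm (x, y0) (0, y1' - z) = 0" using f2 H1c[OF refl] by simp
        ultimately have "H1 jm (x, y0) (0, (1 - T) *\<^sub>R d) = 0" by metis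
        then have "(1 - T) * c jm = 0" using lm[of "1 - T"] by metis
        then have "T = 1" using cjm(1) by simp
        with \<open>T = 0\<close> show False by simp
      qed
    qed
  qed
  have bc: "grad_ystar_exists g h k X x" if sing: "ystar g h k x = {ys}" for ys
  proof -
    have scsc: "SCSC_point g h k x" by (rule ba[OF sing])
    have yss: "ys \<in> ystar g h k x" using sing by simp
    define A where "A = {i. i < k \<and> h i x ys = 0}"
    have Ak: "A \<subseteq> {..<k}" unfolding A_def by auto
    have feas0: "\<forall>i<k. h i x ys \<le> 0" using yss unfolding ystar_def Yeq by auto
    have act: "\<And>i. i \<in> A \<Longrightarrow> h i x ys = 0" unfolding A_def by auto
    have inact: "\<And>i. i < k \<Longrightarrow> i \<notin> A \<Longrightarrow> h i x ys < 0" using feas0 unfolding A_def by force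
    define lam0 where "lam0 = kkt_lambda g h k x ys"
    have K0: "KKT_mult g h k x ys lam0" and KK: "\<forall>v. G1 (x, ys) (0, v) + (\<Sum>i<k. lam0 i * H1 i (x, ys) (0, v)) = 0"
      using Ksol[OF yss] unfolding lam0_def by auto
    have lam0nn: "\<forall>i<k. lam0 i \<ge> 0 \<and> lam0 i * h i x ys = 0" using K0 unfolding KKT_mult_def by blast
    have pos: "\<And>i. i \<in> A \<Longrightarrow> lam0 i > 0"
      using scsc yss unfolding SCSC_point_def lam0_def A_def by blast
    have kkt: "\<And>v. G1 (x, ys) (0, v) + (\<Sum>i\<in>A. lam0 i * H1 i (x, ys) (0, v)) = 0"
    proof -
      fix v
      have "(\<Sum>i<k. lam0 i * H1 i (x, ys) (0, v)) = (\<Sum>i<k. if h i x ys = 0 then lam0 i * H1 i (x, ys) (0, v) else 0)"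
        by (rule sum.cong) (use lam0nn in auto)
      also have "\<dots> = (\<Sum>i\<in>{i\<in>{..<k}. h i x ys = 0}. lam0 i * H1 i (x, ys) (0, v))"
        by (rule sum.inter_filter[symmetric]) simp
      also have "{i\<in>{..<k}. h i x ys = 0} = A" unfolding A_def by auto
      finally show "G1 (x, ys) (0, v) + (\<Sum>i\<in>A. lam0 i * H1 i (x, ys) (0, v)) = 0" using KK[rule_format, of v] by simp
    qed
    have licq0: "LICQ h k x ys" using A3 xX yss unfolding A3_def by blast
    have licqA: "\<forall>c. (\<forall>v. (\<Sum>i\<in>A. c i * H1 i (x, ys) (0, v)) = 0) \<longrightarrow> (\<forall>i\<in>A. c i = 0)"
    proof (rule allI, rule impI)
      fix c assume c: "\<forall>v. (\<Sum>i\<in>A. c i * H1 i (x, ys) (0, v)) = 0"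
      have "\<forall>v. (\<Sum>i\<in>{i. i < k \<and> h i x ys = 0}. c i * frechet_derivative (h i x) (at ys) v) = 0"
      proof
        fix v
        have "(\<Sum>i\<in>{i. i < k \<and> h i x ys = 0}. c i * frechet_derivative (h i x) (at ys) v)
            = (\<Sum>i\<in>A. c i * H1 i (x, ys) (0, v))"
          unfolding A_def by (rule sum.cong) (auto simp: frechet_derivative_at[OF dhx, symmetric])
        then show "(\<Sum>i\<in>{i. i < k \<and> h i x ys = 0}. c i * frechet_derivative (h i x) (at ys) v) = 0"
          using c by simp
      qed
      then show "\<forall>i\<in>A. c i = 0" using licq0 unfolding LICQ_def A_def by blast
    qed
    have span: "dy = 0" if h1: "\<forall>i\<in>A. H1 i (x, ys) (0, dy) = 0" for dy
    proof -
      define u where "u = (if G1 (x, ys) (0, dy) \<le> 0 then dy else - dy)"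
      have negs: "H1 i (x, ys) (0, - dy) = - H1 i (x, ys) (0, dy)" for i
        using linear_neg[OF linH[of i "(x, ys)"]] by simp
      have negg: "G1 (x, ys) (0, - dy) = - G1 (x, ys) (0, dy)"
        using linear_neg[OF linG[of "(x, ys)"]] by simp
      have ua: "\<forall>i<k. h i x ys = 0 \<longrightarrow> H1 i (x, ys) (0, u) \<le> 0"
        using h1 negs unfolding A_def u_def by auto
      have ug: "G1 (x, ys) (0, u) \<le> 0" using negg unfolding u_def by auto
      obtain t where t: "t > 0" "ys + t *\<^sub>R u \<in> ystar g h k x" using pert[OF yss ua ug] by blast
      then have "ys + t *\<^sub>R u = ys" using sing by auto
      then have "u = 0" using t(1) by simp
      then show "dy = 0" unfolding u_def by (auto split: if_splits)
    qed
    have qc: "dy = 0" if "\<forall>i\<in>A. H1 i (x, ys) (0, dy) = 0"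
      and "G2 (x, ys) (0, dy) (0, dy) + (\<Sum>i\<in>A. lam0 i * H2 i (x, ys) (0, dy) (0, dy)) = 0" for dy
      using span that(1) by blast
    obtain e Y \<Lambda> where e: "e > 0" "Y differentiable (at x)"
      "\<forall>x'\<in>ball x e. (\<forall>i\<in>A. h i x' (Y x') = 0 \<and> \<Lambda> x' i > 0) \<and> (\<forall>i. i < k \<and> i \<notin> A \<longrightarrow> h i x' (Y x') < 0) \<and>
       (\<forall>v. G1 (x', Y x') (0, v) + (\<Sum>i\<in>A. \<Lambda> x' i * H1 i (x', Y x') (0, v)) = 0) \<and>
       (\<forall>y'. (\<forall>s\<in>{0..1}. (\<forall>v. G1 (x', Y x' + s *\<^sub>R (y' - Y x')) (0, v) +
                (\<Sum>i\<in>A. \<Lambda> x' i * H1 i (x', Y x' + s *\<^sub>R (y' - Y x')) (0, v)) = 0)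
            \<and> (\<forall>i\<in>A. h i x' (Y x' + s *\<^sub>R (y' - Y x')) = 0)) \<longrightarrow> y' = Y x')"
      using local_kkt[of g G1 G2 k h H1 H2 A x ys lam0, OF dG1 dG2 cG2 dH1 dH2 cH2 Ak act inact pos kkt licqA qc]
      by blast
    have ysx: "ystar g h k x' = {Y x'}" if x': "x' \<in> X \<inter> ball x e" for x'
    proof -
      have x'X: "x' \<in> X" and x'b: "x' \<in> ball x e" using x' by auto
      note P = e(3)[rule_format, OF x'b]
      have chc': "\<And>i. i < k \<Longrightarrow> convex_on UNIV (h i x')" using affh[OF x'X] by blast
      have feas: "\<forall>i<k. h i x' (Y x') \<le> 0"
      proof (intro allI impI)
        fix i assume "i < k" then show "h i x' (Y x') \<le> 0" using P by (cases "i \<in> A") (auto intro: less_imp_le)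
      qed
      have opt: "g x' (Y x') \<le> g x' y'" if y': "\<forall>i<k. h i x' y' \<le> 0" for y'
      proof (rule kkt_suff[of "g x'" "\<lambda>v. G1 (x', Y x') (0, v)" "Y x'" k "\<lambda>i. h i x'" A
            "\<lambda>i v. H1 i (x', Y x') (0, v)" "\<lambda>i. \<Lambda> x' i"])
        show "convex_on UNIV (g x')" using affg[OF x'X] by blast
        show "(g x' has_derivative (\<lambda>v. G1 (x', Y x') (0, v))) (at (Y x'))" by (rule dgx)
        show "\<And>i. i < k \<Longrightarrow> convex_on UNIV (h i x')" by (rule chc')
        show "\<And>i. i \<in> A \<Longrightarrow> (h i x' has_derivative (\<lambda>v. H1 i (x', Y x') (0, v))) (at (Y x'))"
          using dhx Ak by auto
      qed (use P y' Ak in \<open>auto intro: less_imp_le\<close>)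
      have Ymem: "Y x' \<in> ystar g h k x'" unfolding ystar_def Yeq using feas opt by auto
      show ?thesis
      proof (intro equalityI subsetI)
        fix y' assume y': "y' \<in> ystar g h k x'"
        have y'f: "\<forall>i<k. h i x' y' \<le> 0" using y' unfolding ystar_def Yeq by auto
        have le: "g x' y' \<le> g x' (Y x')" using y' Ymem unfolding ystar_def by auto
        have fin: "finite A" using Ak finite_subset by blast
        have fc: "\<forall>i\<in>A. \<Lambda> x' i > 0 \<longrightarrow> H1 i (x', Y x') (0, y' - Y x') = 0"
        proof (rule lin_face[of "g x'" y' "Y x'" "\<lambda>v. G1 (x', Y x') (0, v)" A "\<lambda>i. h i x'"
              "\<lambda>i v. H1 i (x', Y x') (0, v)" "\<lambda>i. \<Lambda> x' i"])
          show "g x' y' = g x' (Y x') + G1 (x', Y x') (0, y' - Y x')"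
            using affg[OF x'X, where y="Y x'" and y'=y'] by simp
          show "\<And>i. i \<in> A \<Longrightarrow> h i x' y' = h i x' (Y x') + H1 i (x', Y x') (0, y' - Y x')"
            using affh[OF x'X, where y="Y x'" and y'=y'] Ak by auto
        qed (use fin P y'f le Ak in \<open>auto intro: less_imp_le\<close>)
        have "\<forall>s\<in>{0..1}. (\<forall>v. G1 (x', Y x' + s *\<^sub>R (y' - Y x')) (0, v) +
                (\<Sum>i\<in>A. \<Lambda> x' i * H1 i (x', Y x' + s *\<^sub>R (y' - Y x')) (0, v)) = 0)
            \<and> (\<forall>i\<in>A. h i x' (Y x' + s *\<^sub>R (y' - Y x')) = 0)"
        proof (intro ballI conjI allI)
          fix s :: real and v :: 'b assume s: "s \<in> {0..1}"
          have "G1 (x', Y x' + s *\<^sub>R (y' - Y x')) (0, v) = G1 (x', Y x') (0, v)"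
            using affg[OF x'X, where y="Y x' + s *\<^sub>R (y' - Y x')" and y'="Y x'"] by blast
          moreover have "(\<Sum>i\<in>A. \<Lambda> x' i * H1 i (x', Y x' + s *\<^sub>R (y' - Y x')) (0, v)) =
              (\<Sum>i\<in>A. \<Lambda> x' i * H1 i (x', Y x') (0, v))"
            by (rule sum.cong) (use affh[OF x'X, where y="Y x' + s *\<^sub>R (y' - Y x')" and y'="Y x'"] Ak in auto)
          ultimately show "G1 (x', Y x' + s *\<^sub>R (y' - Y x')) (0, v) +
                (\<Sum>i\<in>A. \<Lambda> x' i * H1 i (x', Y x' + s *\<^sub>R (y' - Y x')) (0, v)) = 0"
            using P by simp
        next
          fix s :: real and i assume s: "s \<in> {0..1}" and i: "i \<in> A"
          have ik: "i < k" using i Ak by auto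
          have "h i x' (Y x' + s *\<^sub>R (y' - Y x')) = h i x' (Y x') + H1 i (x', Y x') (0, s *\<^sub>R (y' - Y x'))"
            using affh[OF x'X ik, where y="Y x'" and y'="Y x' + s *\<^sub>R (y' - Y x')"] by simp
          also have "H1 i (x', Y x') (0, s *\<^sub>R (y' - Y x')) = s * H1 i (x', Y x') (0, y' - Y x')"
            using linear_cmul[OF linH[of i "(x', Y x')"]] by simp
          finally show "h i x' (Y x' + s *\<^sub>R (y' - Y x')) = 0" using fc P i by simp
        qed
        then have "y' = Y x'" using P by blast
        then show "y' \<in> {Y x'}" by simp
      next
        fix y assume "y \<in> {Y x'}" then show "y \<in> ystar g h k x'" using Ymem by simp
      qed
    qed
    show ?thesis unfolding grad_ystar_exists_def
      using e(1) ysx differentiable_at_withinI[OF e(2)] by blast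
  qed
  have cb: "\<exists>y. ystar g h k x = {y}" if "grad_ystar_exists g h k X x"
    using that xX unfolding grad_ystar_exists_def by auto
  show ?thesis using ab ba bc cb by blast
qed


lemma example:
  "\<exists>(f0::real \<Rightarrow> real \<Rightarrow> real) (g0::real \<Rightarrow> real \<Rightarrow> real) (h0::nat \<Rightarrow> real \<Rightarrow> real \<Rightarrow> real)
         (k0::nat) (X0::real set) (x0::real).
         A1 f0 g0 h0 k0 \<and> A2 h0 k0 X0 \<and> A3 g0 h0 k0 X0 \<and> SC g0 h0 k0 X0 \<and> x0 \<in> X0 \<and>
         grad_ystar_exists g0 h0 k0 X0 x0 \<and> \<not> SCSC_point g0 h0 k0 x0"
proof -
  define f0 :: "real \<Rightarrow> real \<Rightarrow> real" where "f0 x y = 0" for x y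
  define g0 :: "real \<Rightarrow> real \<Rightarrow> real" where "g0 x y = y * y" for x y
  define h0 :: "nat \<Rightarrow> real \<Rightarrow> real \<Rightarrow> real" where "h0 i x y = - y" for i x y
  have blsnd: "bounded_linear (\<lambda>u::real \<times> real. snd u)" by (rule bounded_linear_snd)
  define Bs :: "(real \<times> real) \<Rightarrow>\<^sub>L real" where "Bs = Blinfun snd"
  have Bsa: "blinfun_apply Bs = snd" unfolding Bs_def using blsnd bounded_linear_Blinfun_apply by auto
  have C1f: "C1_fun (case_prod f0)"
    unfolding C1_fun_def
  proof (intro exI[of _ "\<lambda>z. 0"] conjI allI)
    fix z :: "real \<times> real"
    show "(case_prod f0 has_derivative blinfun_apply 0) (at z)"
      unfolding f0_def by (simp add: case_prod_beta' has_derivative_const zero_blinfun.rep_eq[abs_def])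
  qed simp
  have C2g: "C2_fun (case_prod g0)"
    unfolding C2_fun_def
  proof (intro exI[of _ "\<lambda>z. (2 * snd z) *\<^sub>R Bs"] exI[of _ "\<lambda>z. Blinfun (\<lambda>u. (2 * snd u) *\<^sub>R Bs)"] conjI allI)
    fix z :: "real \<times> real"
    show "(case_prod g0 has_derivative blinfun_apply ((2 * snd z) *\<^sub>R Bs)) (at z)"
    proof -
      have "((\<lambda>z::real \<times> real. snd z * snd z) has_derivative (\<lambda>u. snd z * snd u + snd u * snd z)) (at z)"
        by (auto intro!: derivative_eq_intros)
      moreover have "(\<lambda>u. snd z * snd u + snd u * snd z) = blinfun_apply ((2 * snd z) *\<^sub>R Bs)"
        by (auto simp: Bsa fun_eq_iff scaleR_blinfun.rep_eq)
      moreover have "case_prod g0 = (\<lambda>z. snd z * snd z)" unfolding g0_def by (auto simp: fun_eq_iff)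
      ultimately show ?thesis by simp
    qed
    have bl2: "bounded_linear (\<lambda>u::real \<times> real. (2 * snd u) *\<^sub>R Bs)"
    proof -
      have "bounded_linear (\<lambda>u::real \<times> real. 2 * snd u)"
        using bounded_linear_compose[OF bounded_linear_mult_right[of 2] blsnd] by (simp add: o_def)
      from bounded_linear_compose[OF bounded_linear_scaleR_left[of Bs] this] show ?thesis by (simp add: o_def)
    qed
    show "((\<lambda>z. (2 * snd z) *\<^sub>R Bs) has_derivative blinfun_apply (Blinfun (\<lambda>u. (2 * snd u) *\<^sub>R Bs))) (at z)"
      using bounded_linear_imp_has_derivative[OF bl2] bounded_linear_Blinfun_apply[OF bl2] by simp
  qed simp
  have C2h: "C2_fun (case_prod (h0 i))" for i
    unfolding C2_fun_def
  proof (intro exI[of _ "\<lambda>z. - Bs"] exI[of _ "\<lambda>z. 0"] conjI allI)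
    fix z :: "real \<times> real"
    show "(case_prod (h0 i) has_derivative blinfun_apply (- Bs)) (at z)"
    proof -
      have "((\<lambda>z::real \<times> real. - snd z) has_derivative (\<lambda>u. - snd u)) (at z)"
        by (auto intro!: derivative_eq_intros)
      moreover have "(\<lambda>u. - snd u) = blinfun_apply (- Bs)" by (auto simp: Bsa fun_eq_iff uminus_blinfun.rep_eq)
      moreover have "case_prod (h0 i) = (\<lambda>z. - snd z)" unfolding h0_def by (auto simp: fun_eq_iff)
      ultimately show ?thesis by simp
    qed
    show "((\<lambda>z. - Bs) has_derivative blinfun_apply 0) (at z)"
      by (simp add: has_derivative_const zero_blinfun.rep_eq[abs_def])
  qed simp
  have A1: "A1 f0 g0 h0 1" unfolding A1_def using C1f C2g C2h by auto
  have A2: "A2 h0 1 {0}" unfolding A2_def h0_def by (auto intro!: exI[of _ 1])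
  have Yeq: "Yset h0 1 x = {y. y \<ge> 0}" for x unfolding Yset_def h0_def by auto
  have ys: "ystar g0 h0 1 x = {0}" for x
  proof (intro equalityI subsetI)
    fix y assume "y \<in> ystar g0 h0 1 x"
    then have "y * y \<le> 0 * 0" unfolding ystar_def Yeq g0_def by auto
    then show "y \<in> {0}" by (simp add: mult_le_0_iff) (meson antisym)
  next
    fix y :: real assume "y \<in> {0}"
    then show "y \<in> ystar g0 h0 1 x" unfolding ystar_def Yeq g0_def by auto
  qed
  have dg: "(g0 x has_derivative (\<lambda>v. 0 * v + v * 0)) (at 0)" for x
    unfolding g0_def by (auto intro!: derivative_eq_intros)
  have dh: "(h0 i x has_derivative (\<lambda>v. - v)) (at y)" for i x y
    unfolding h0_def by (auto intro!: derivative_eq_intros)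
  have fdg: "frechet_derivative (g0 x) (at 0) = (\<lambda>v. 0)" for x
    using frechet_derivative_at[OF dg] by simp
  have fdh: "frechet_derivative (h0 i x) (at y) = (\<lambda>v. - v)" for i x y
    using frechet_derivative_at[OF dh] by simp
  have licq: "LICQ h0 1 x 0" for x
    unfolding LICQ_def
  proof (intro allI impI)
    fix c :: "nat \<Rightarrow> real" and i
    assume c: "\<forall>v. (\<Sum>i\<in>{i. i < 1 \<and> h0 i x 0 = 0}. c i * frechet_derivative (h0 i x) (at 0) v) = 0"
      and i: "i < 1 \<and> h0 i x 0 = 0"
    have "{i. i < (1::nat) \<and> h0 i x 0 = 0} = {0}" unfolding h0_def by auto
    then have "c 0 * (- 1) = 0" using c[rule_format, of 1] by (simp add: fdh)
    then show "c i = 0" using i by simp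
  qed
  have A3: "A3 g0 h0 1 {0}" unfolding A3_def using licq ys by auto
  have SC: "SC g0 h0 1 {0}"
    unfolding SC_def
  proof (intro exI[of _ 2] ballI conjI allI impI)
    fix x :: real
    show "strongly_convex 2 (g0 x)"
      unfolding strongly_convex_def g0_def
    proof (intro conjI allI impI)
      fix a b t :: real
      have e: "(t * a + (1 - t) * b) * (t * a + (1 - t) * b) = t * (a * a) + (1 - t) * (b * b) - t * (1 - t) * ((a - b) * (a - b))"
        by algebra
      have n: "(norm (a - b))\<^sup>2 = (a - b) * (a - b)" by (simp add: power2_eq_square)
      show "(t *\<^sub>R a + (1 - t) *\<^sub>R b) * (t *\<^sub>R a + (1 - t) *\<^sub>R b)
          \<le> t * (a * a) + (1 - t) * (b * b) - 2 / 2 * t * (1 - t) * (norm (a - b))\<^sup>2"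
        using e n by simp
    qed simp
  next
    fix x :: real and i :: nat
    show "convex_on UNIV (h0 i x)"
      unfolding h0_def by (rule convex_onI) (simp_all add: algebra_simps)
  qed
  have G: "grad_ystar_exists g0 h0 1 {0} 0"
    unfolding grad_ystar_exists_def
  proof (intro exI[of _ "1::real"] conjI exI[of _ "\<lambda>_::real. 0::real"])
    show "(1::real) > 0" by simp
    show "\<forall>x'\<in>{0} \<inter> ball 0 1. ystar g0 h0 1 x' = {0}" using ys by blast
    show "(\<lambda>_::real. 0::real) differentiable at 0 within {0}" by simp
  qed
  have K: "KKT_mult g0 h0 1 0 0 (\<lambda>_. 0)" unfolding KKT_mult_def by (simp add: fdg)
  have "kkt_lambda g0 h0 1 0 0 = (\<lambda>_. 0)"
    using kkt_mult_unique[OF licq kkt_lambda_KKT[OF licq K] K] .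
  then have nS: "\<not> SCSC_point g0 h0 1 0"
    unfolding SCSC_point_def ys h0_def by auto
  show ?thesis using A1 A2 A3 SC G nS by blast
qed


theorem proposition2:
  fixes f g :: "'a::euclidean_space \<Rightarrow> 'b::euclidean_space \<Rightarrow> real"
    and h :: "nat \<Rightarrow> 'a \<Rightarrow> 'b \<Rightarrow> real" and k :: nat and X :: "'a set" and x :: 'a
  assumes "A1 f g h k" and "A2 h k X" and "A3 g h k X" and "x \<in> X"
  shows "(SC g h k X \<longrightarrow> SCSC_point g h k x \<longrightarrow> grad_ystar_exists g h k X x)
    \<and> (\<exists>(f0::real \<Rightarrow> real \<Rightarrow> real) (g0::real \<Rightarrow> real \<Rightarrow> real) (h0::nat \<Rightarrow> real \<Rightarrow> real \<Rightarrow> real)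
         (k0::nat) (X0::real set) (x0::real).
         A1 f0 g0 h0 k0 \<and> A2 h0 k0 X0 \<and> A3 g0 h0 k0 X0 \<and> SC g0 h0 k0 X0 \<and> x0 \<in> X0 \<and>
         grad_ystar_exists g0 h0 k0 X0 x0 \<and> \<not> SCSC_point g0 h0 k0 x0)
    \<and> (LIN g h k X \<longrightarrow>
         (SCSC_point g h k x \<longleftrightarrow> (\<exists>y. ystar g h k x = {y})) \<and>
         ((\<exists>y. ystar g h k x = {y}) \<longleftrightarrow> grad_ystar_exists g h k X x))"
  proof -
  have 1: "SC g h k X \<longrightarrow> SCSC_point g h k x \<longrightarrow> grad_ystar_exists g h k X x"
    using part1[OF assms] by blast
  have 3: "LIN g h k X \<longrightarrow>
         (SCSC_point g h k x \<longleftrightarrow> (\<exists>y. ystar g h k x = {y})) \<and>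
         ((\<exists>y. ystar g h k x = {y}) \<longleftrightarrow> grad_ystar_exists g h k X x)"
    using part2[OF assms] by blast
  show ?thesis using 1 example 3 by blast
qed

end
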